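(* Let $\phi\in C^1([0,\infty);[0,\infty))$ satisfy $\max_{r\ge0}\phi(r)=\phi(0)>0$ and $\max_{r\ge0}|r\phi(r)|=A_\infty$ for some constant $A_\infty>0$. Then for every $b>\frac{4}{\phi(0)}$ there exists a solution $v$ of $$r v''=v'\Big(1-v\,\phi\big(\tfrac{v}{r}\big)\Big),\quad r>0,\qquad v(0)=v'(0)=0,$$ such that $\lim_{r\to+\infty}v(r)=b$. *)

theory Defs
  imports "HOL-Analysis.Analysis"
begin

end

theory Submission
  imports Defs "HOL-Analysis.Analysis"
begin


lemma mono_deriv:
  fixes g g' :: "real \<Rightarrow> real"
  assumes ab: "a \<le> b" and cg: "continuous_on {a..b} g"
    and dg: "\<And>x. a < x \<Longrightarrow> x < b \<Longrightarrow> (g has_real_derivative g' x) (at x)"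
    and pos: "\<And>x. a < x \<Longrightarrow> x < b \<Longrightarrow> g' x \<ge> 0"
  shows "g a \<le> g b"
proof (cases "a = b")
  case True then show ?thesis by simp
next
  case False
  then have "a < b" using ab by simp
  from MVT[OF this cg] dg obtain l z where z: "a < z" "z < b" "DERIV g z :> l" "g b - g a = (b - a) * l"
    using real_differentiable_def by blast
  have "l = g' z" using DERIV_unique[OF z(3) dg[OF z(1,2)]] .
  then have "l \<ge> 0" using pos z by simp
  then show ?thesis using z(4) \<open>a < b\<close> by (smt (verit) mult_nonneg_nonneg)
qed

lemma exp_neg_lip:
  fixes a b :: real assumes "a \<ge> 0" "b \<ge> 0"
  shows "\<bar>exp (-a) - exp (-b)\<bar> \<le> \<bar>a - b\<bar>"
proof -
  have key: "exp (-x) - exp (-y) \<le> y - x" if "0 \<le> x" "x \<le> y" for x y :: real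
  proof -
    have "exp (-(y-x)) \<ge> 1 - (y - x)" using exp_ge_add_one_self[of "x - y"] by (simp add: algebra_simps)
    then have "1 - exp (-(y-x)) \<le> y - x" by simp
    moreover have "exp (-x) \<le> 1" using that by simp
    moreover have "1 - exp (-(y-x)) \<ge> 0" using that by simp
    ultimately have "exp (-x) * (1 - exp (-(y-x))) \<le> 1 * (y - x)"
      by (intro mult_mono) auto
    moreover have "exp (-x) * (1 - exp (-(y-x))) = exp (-x) - exp (-y)"
      by (simp add: algebra_simps flip: exp_add)
    ultimately show ?thesis by simp
  qed
  show ?thesis
  proof (cases "a \<le> b")
    case True
    then show ?thesis using key[of a b] assms by (simp add: abs_if)
  next
    case False
    then show ?thesis using key[of b a] assms by (simp add: abs_if)
  qed
qed

lemma integral_exp_lin: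
  fixes \<beta> s :: real assumes "\<beta> > 0" "s \<ge> 0"
  shows "integral {0..s} (\<lambda>t. exp (\<beta> * t)) = (exp (\<beta> * s) - 1) / \<beta>"
proof -
  have "((\<lambda>t. exp (\<beta> * t)) has_integral (exp (\<beta> * s) / \<beta> - exp (\<beta> * 0) / \<beta>)) {0..s}"
  proof (rule fundamental_theorem_of_calculus)
    show "0 \<le> s" using assms by simp
    fix x assume "x \<in> {0..s}"
    show "((\<lambda>t. exp (\<beta> * t) / \<beta>) has_vector_derivative exp (\<beta> * x)) (at x within {0..s})"
      using assms
      by (auto intro!: derivative_eq_intros simp: has_real_derivative_iff_has_vector_derivative[symmetric])
  qed
  then show ?thesis by (simp add: integral_unique diff_divide_distrib)
qed

lemma cont_on_nonneg:
  fixes f :: "real \<Rightarrow> 'b::topological_space"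
  assumes "\<And>R. R > 0 \<Longrightarrow> continuous_on {0..R} f"
  shows "continuous_on {0..} f"
proof -
  have "continuous (at t within {0..}) f" if "t \<ge> 0" for t
  proof -
    have "continuous (at t within {0..t+1}) f"
      using assms[of "t+1"] that by (simp add: continuous_on_eq_continuous_within)
    moreover have "at t within {0..t+1} = at t within {0..}"
      by (rule at_within_nhd[of _ "{..<t+1}"]) (auto simp: that)
    ultimately show ?thesis by simp
  qed
  then show ?thesis by (simp add: continuous_on_eq_continuous_within)
qed



definition cl :: "real \<Rightarrow> real \<Rightarrow> real" where "cl R t = max 0 (min R t)"

lemma cl_range: "R \<ge> 0 \<Longrightarrow> cl R t \<in> {0..R}" by (auto simp: cl_def)
lemma cl_id: "t \<in> {0..R} \<Longrightarrow> cl R t = t" by (auto simp: cl_def)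
lemma cl_lip: "\<bar>cl R a - cl R b\<bar> \<le> \<bar>a - b\<bar>" by (auto simp: cl_def)
lemma cl_cont: "continuous_on S (cl R)" unfolding cl_def by (intro continuous_intros)

lemma integral_2x: "(s::real) \<ge> 0 \<Longrightarrow> integral {0..s} (\<lambda>t. 2 * t) = s\<^sup>2"
proof -
  assume s: "s \<ge> 0"
  have "((\<lambda>t. 2 * t) has_integral (s\<^sup>2 - 0\<^sup>2)) {0..s}"
  proof (rule fundamental_theorem_of_calculus)
    show "0 \<le> s" using s .
    fix x assume "x \<in> {0..s}"
    show "((\<lambda>t. t\<^sup>2) has_vector_derivative 2 * x) (at x within {0..s})"
      by (auto intro!: derivative_eq_intros simp: has_real_derivative_iff_has_vector_derivative[symmetric])
  qed
  then have "((\<lambda>t. 2 * t) has_integral s\<^sup>2) {0..s}" by simp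
  then show ?thesis by (rule integral_unique)
qed

locale phiset =
  fixes phi :: "real \<Rightarrow> real" and A :: real
  assumes cont: "continuous_on {0..} phi"
  and lip: "\<And>S. S \<ge> 0 \<Longrightarrow> \<exists>M\<ge>0. \<forall>y1\<in>{0..S}. \<forall>y2\<in>{0..S}. \<bar>phi y1 - phi y2\<bar> \<le> M * \<bar>y1 - y2\<bar>"
  and nonneg: "\<And>r. r \<ge> 0 \<Longrightarrow> phi r \<ge> 0"
  and le0: "\<And>r. r \<ge> 0 \<Longrightarrow> phi r \<le> phi 0"
  and pos0: "phi 0 > 0"
  and Abd: "\<And>r. r \<ge> 0 \<Longrightarrow> r * phi r \<le> A"
begin

definition MM :: "real \<Rightarrow> real" where
  "MM S = (SOME M. M \<ge> 0 \<and> (\<forall>y1\<in>{0..S}. \<forall>y2\<in>{0..S}. \<bar>phi y1 - phi y2\<bar> \<le> M * \<bar>y1 - y2\<bar>))"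

lemma MM: assumes "S \<ge> 0"
  shows "MM S \<ge> 0" "\<And>y1 y2. y1 \<in> {0..S} \<Longrightarrow> y2 \<in> {0..S} \<Longrightarrow> \<bar>phi y1 - phi y2\<bar> \<le> MM S * \<bar>y1 - y2\<bar>"
  using someI_ex[OF lip[OF assms]] unfolding MM_def by blast+

definition Fn :: "real \<Rightarrow> real \<Rightarrow> real \<Rightarrow> real" where
  "Fn l R a = cl R a * phi (l * cl R a)"
definition Ex :: "real \<Rightarrow> real \<Rightarrow> (real \<Rightarrow> real) \<Rightarrow> real \<Rightarrow> real" where
  "Ex l R x s = exp (- integral {0..s} (\<lambda>t. Fn l R (x t)))"
definition Sx :: "real \<Rightarrow> real \<Rightarrow> (real \<Rightarrow> real) \<Rightarrow> real \<Rightarrow> real" where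
  "Sx l R x r = (if r \<le> 0 then 0 else integral {0..r} (\<lambda>s. 2 * s * Ex l R x s) / r)"
definition KK :: "real \<Rightarrow> real \<Rightarrow> real" where
  "KK L R = phi 0 + R * L * MM (L * R)"

lemma Fn_cont: assumes "l \<ge> 0" "R \<ge> 0" shows "continuous_on S (Fn l R)"
proof -
  have "continuous_on S (\<lambda>a. phi (l * cl R a))"
    by (rule continuous_on_compose2[OF cont]) (auto intro!: continuous_intros cl_cont simp: assms cl_def)
  then show ?thesis unfolding Fn_def by (intro continuous_intros cl_cont)
qed

lemma Fn_bounds: assumes "l \<ge> 0" "R \<ge> 0" shows "0 \<le> Fn l R a" "Fn l R a \<le> R * phi 0"
proof -
  have c: "cl R a \<in> {0..R}" using cl_range assms by blast
  then have "l * cl R a \<ge> 0" using assms by simp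
  then have "0 \<le> phi (l * cl R a)" "phi (l * cl R a) \<le> phi 0" using nonneg le0 by auto
  then show "0 \<le> Fn l R a" "Fn l R a \<le> R * phi 0" unfolding Fn_def using c
    by (auto intro: mult_mono)
qed

lemma Fn_eq: "a \<in> {0..R} \<Longrightarrow> Fn l R a = a * phi (l * a)"
  by (simp add: Fn_def cl_id)

lemma KK_nonneg: "L \<ge> 0 \<Longrightarrow> R \<ge> 0 \<Longrightarrow> KK L R \<ge> 0"
  unfolding KK_def using MM(1)[of "L*R"] pos0 by simp

lemma Fn_lip:
  assumes l: "l \<in> {0..L}" and m: "m \<in> {0..L}" and R: "R \<ge> 0"
  shows "\<bar>Fn l R a - Fn m R b\<bar> \<le> KK L R * \<bar>a - b\<bar> + R * R * MM (L * R) * \<bar>l - m\<bar>"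
proof -
  define c where "c = cl R a"
  define d where "d = cl R b"
  have c: "c \<in> {0..R}" and d: "d \<in> {0..R}" using cl_range R c_def d_def by blast+
  have cd: "\<bar>c - d\<bar> \<le> \<bar>a - b\<bar>" using cl_lip c_def d_def by blast
  have L: "L \<ge> 0" using l by simp
  have lc: "l * c \<in> {0..L*R}" using l c by (auto intro: mult_mono)
  have md: "m * d \<in> {0..L*R}" using m d by (auto intro: mult_mono)
  have M0: "MM (L*R) \<ge> 0" using MM(1) L R by simp
  have p1: "phi (l*c) \<le> phi 0" "phi (l*c) \<ge> 0" using le0 nonneg lc by auto
  have "\<bar>l*c - m*d\<bar> \<le> L * \<bar>c - d\<bar> + R * \<bar>l - m\<bar>"
  proof -
    have "l*c - m*d = l*(c-d) + d*(l-m)" by (simp add: algebra_simps)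
    then have "\<bar>l*c - m*d\<bar> \<le> \<bar>l\<bar>*\<bar>c-d\<bar> + \<bar>d\<bar>*\<bar>l-m\<bar>" by (simp add: abs_mult[symmetric])
    also have "\<dots> \<le> L * \<bar>c - d\<bar> + R * \<bar>l - m\<bar>"
      using l d by (intro add_mono mult_right_mono) auto
    finally show ?thesis .
  qed
  have "Fn l R a - Fn m R b = (c - d) * phi (l*c) + d * (phi (l*c) - phi (m*d))"
    unfolding Fn_def c_def[symmetric] d_def[symmetric] by (simp add: algebra_simps)
  then have "\<bar>Fn l R a - Fn m R b\<bar> \<le> \<bar>c - d\<bar> * phi (l*c) + d * \<bar>phi (l*c) - phi (m*d)\<bar>"
    using p1 d by (simp add: abs_mult) (metis abs_mult abs_of_nonneg abs_triangle_ineq atLeastAtMost_iff)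
  also have "\<dots> \<le> \<bar>a - b\<bar> * phi 0 + R * (MM (L*R) * (L * \<bar>c - d\<bar> + R * \<bar>l - m\<bar>))"
  proof (intro add_mono mult_mono)
    show "\<bar>phi (l*c) - phi (m*d)\<bar> \<le> MM (L*R) * (L * \<bar>c - d\<bar> + R * \<bar>l - m\<bar>)"
      using MM(2)[OF _ lc md] L R M0 \<open>\<bar>l*c - m*d\<bar> \<le> _\<close>
      by (meson mult_left_mono order_trans mult_nonneg_nonneg)
  qed (use cd p1 d R M0 L in auto)
  also have "\<dots> \<le> \<bar>a - b\<bar> * phi 0 + R * (MM (L*R) * (L * \<bar>a - b\<bar> + R * \<bar>l - m\<bar>))"
    using cd R M0 L by (intro add_mono mult_left_mono) auto
  also have "\<dots> = KK L R * \<bar>a - b\<bar> + R * R * MM (L * R) * \<bar>l - m\<bar>"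
    unfolding KK_def by (simp add: algebra_simps)
  finally show ?thesis .
qed

end

context phiset begin

lemma Fx_cont:
  assumes "l \<ge> 0" "R \<ge> 0" "continuous_on S x"
  shows "continuous_on S (\<lambda>t. Fn l R (x t))"
  using continuous_on_compose2[OF Fn_cont[OF assms(1,2), of UNIV] assms(3)] by simp

lemma Fx_int:
  assumes "l \<ge> 0" "R \<ge> 0" "continuous_on {0..R} x" "s \<le> R"
  shows "(\<lambda>t. Fn l R (x t)) integrable_on {0..s}"
  by (rule integrable_continuous_interval, rule Fx_cont) (use assms in \<open>auto intro: continuous_on_subset\<close>)

lemma Ex_cont:
  assumes "l \<ge> 0" "R \<ge> 0" "continuous_on {0..R} x"
  shows "continuous_on {0..R} (Ex l R x)"
proof -
  have "continuous_on {0..R} (\<lambda>s. integral {0..s} (\<lambda>t. Fn l R (x t)))"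
    by (rule indefinite_integral_continuous_1, rule Fx_int) (use assms in auto)
  then show ?thesis unfolding Ex_def by (intro continuous_intros)
qed

lemma Ex_bounds:
  assumes "l \<ge> 0" "R \<ge> 0" "continuous_on {0..R} x" "s \<in> {0..R}"
  shows "0 < Ex l R x s" "Ex l R x s \<le> 1"
proof -
  have "integral {0..s} (\<lambda>t. Fn l R (x t)) \<ge> 0"
    by (rule integral_nonneg[OF Fx_int]) (use assms Fn_bounds in auto)
  then show "0 < Ex l R x s" "Ex l R x s \<le> 1" unfolding Ex_def by auto
qed

lemma Ix_cont:
  assumes "l \<ge> 0" "R \<ge> 0" "continuous_on {0..R} x"
  shows "continuous_on {0..R} (\<lambda>s. 2 * s * Ex l R x s)"
  using Ex_cont[OF assms] by (intro continuous_intros)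

lemma Ix_int:
  assumes "l \<ge> 0" "R \<ge> 0" "continuous_on {0..R} x" "r \<le> R"
  shows "(\<lambda>s. 2 * s * Ex l R x s) integrable_on {0..r}"
  by (rule integrable_continuous_interval, rule continuous_on_subset[OF Ix_cont[OF assms(1-3)]]) (use assms in auto)

lemma Ix_bounds:
  assumes "l \<ge> 0" "R \<ge> 0" "continuous_on {0..R} x" "r \<in> {0..R}"
  shows "0 \<le> integral {0..r} (\<lambda>s. 2 * s * Ex l R x s)"
        "integral {0..r} (\<lambda>s. 2 * s * Ex l R x s) \<le> r\<^sup>2"
proof -
  have int: "(\<lambda>s. 2 * s * Ex l R x s) integrable_on {0..r}" using Ix_int assms by auto
  show "0 \<le> integral {0..r} (\<lambda>s. 2 * s * Ex l R x s)"
  proof (rule integral_nonneg[OF int])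
    fix s assume s: "s \<in> {0..r}"
    then have "Ex l R x s > 0" using Ex_bounds[OF assms(1-3)] assms by auto
    then show "0 \<le> 2 * s * Ex l R x s" using s by simp
  qed
  have "integral {0..r} (\<lambda>s. 2 * s * Ex l R x s) \<le> integral {0..r} (\<lambda>s. 2 * s)"
  proof (rule integral_le[OF int])
    show "(\<lambda>s. 2 * s) integrable_on {0..r}" by (intro integrable_continuous_interval continuous_intros)
    fix s assume "s \<in> {0..r}"
    then have "Ex l R x s \<le> 1" using Ex_bounds[OF assms(1-3)] assms by auto
    then show "2 * s * Ex l R x s \<le> 2 * s" using \<open>s \<in> {0..r}\<close> by (simp add: mult_left_le)
  qed
  then show "integral {0..r} (\<lambda>s. 2 * s * Ex l R x s) \<le> r\<^sup>2" using integral_2x assms by simp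
qed

lemma Sx_bounds:
  assumes "l \<ge> 0" "R \<ge> 0" "continuous_on {0..R} x" "r \<in> {0..R}"
  shows "0 \<le> Sx l R x r" "Sx l R x r \<le> r"
proof -
  note b = Ix_bounds[OF assms]
  show "0 \<le> Sx l R x r" using b by (simp add: Sx_def)
  show "Sx l R x r \<le> r"
  proof (cases "r \<le> 0")
    case True then show ?thesis using assms by (simp add: Sx_def)
  next
    case False
    then show ?thesis using b by (simp add: Sx_def divide_le_eq power2_eq_square)
  qed
qed

lemma Sx_cont:
  assumes l: "l \<ge> 0" and R: "R \<ge> 0" and x: "continuous_on {0..R} x"
  shows "continuous_on {0..R} (Sx l R x)"
proof -
  define I where "I = (\<lambda>r. integral {0..r} (\<lambda>s. 2 * s * Ex l R x s))"
  have Ic: "continuous_on {0..R} I" unfolding I_def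
    by (rule indefinite_integral_continuous_1, rule Ix_int) (use assms in auto)
  have "continuous (at r within {0..R}) (Sx l R x)" if r: "r \<in> {0..R}" for r
  proof (cases "r = 0")
    case False
    then have rpos: "r > 0" using r by auto
    have "continuous (at r within {0..R}) (\<lambda>r. I r / r)"
      using Ic r rpos by (intro continuous_intros) (auto simp: continuous_on_eq_continuous_within)
    then show ?thesis
    proof (rule continuous_transform_within[OF _ rpos r])
      fix r' assume "r' \<in> {0..R}" "dist r' r < r"
      then have "r' > 0" by (auto simp: dist_real_def)
      then show "I r' / r' = Sx l R x r'" by (simp add: Sx_def I_def)
    qed
  next
    case True
    have "(Sx l R x \<longlongrightarrow> 0) (at 0 within {0..R})"
    proof (rule tendsto_sandwich[of "\<lambda>_. 0" _ _ "\<lambda>t. t"])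
      show "\<forall>\<^sub>F t in at 0 within {0..R}. 0 \<le> Sx l R x t"
        using Sx_bounds[OF assms] by (auto simp: eventually_at_filter)
      show "\<forall>\<^sub>F t in at 0 within {0..R}. Sx l R x t \<le> t"
        using Sx_bounds[OF assms] by (auto simp: eventually_at_filter)
      show "((\<lambda>t. t) \<longlongrightarrow> 0) (at 0 within {0..R})"
        by (rule tendsto_ident_at[THEN tendsto_eq_rhs]) simp
    qed simp
    then show ?thesis using True by (simp add: continuous_within Sx_def)
  qed
  then show ?thesis by (simp add: continuous_on_eq_continuous_within)
qed

end


lemma integral_H:
  fixes \<beta> s C c0 :: real assumes "\<beta> > 0" "s \<ge> 0"
  shows "integral {0..s} (\<lambda>t. C * exp (\<beta> * t) + c0) = C * (exp (\<beta> * s) - 1) / \<beta> + c0 * s"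
proof -
  have "((\<lambda>t. C * exp (\<beta> * t) + c0) has_integral
      ((C * exp (\<beta> * s) / \<beta> + c0 * s) - (C * exp (\<beta> * 0) / \<beta> + c0 * 0))) {0..s}"
  proof (rule fundamental_theorem_of_calculus)
    show "0 \<le> s" using assms by simp
    fix x assume "x \<in> {0..s}"
    show "((\<lambda>t. C * exp (\<beta> * t) / \<beta> + c0 * t) has_vector_derivative C * exp (\<beta> * x) + c0) (at x within {0..s})"
      using assms
      by (auto intro!: derivative_eq_intros simp: has_real_derivative_iff_has_vector_derivative[symmetric])
  qed
  then have "((\<lambda>t. C * exp (\<beta> * t) + c0) has_integral (C * (exp (\<beta> * s) - 1) / \<beta> + c0 * s)) {0..s}"
    by (simp add: algebra_simps diff_divide_distrib)
  then show ?thesis by (rule integral_unique)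
qed

context phiset begin

lemma E_diff:
  assumes l: "l \<in> {0..L}" and m: "m \<in> {0..L}" and R: "R > 0" and \<beta>: "\<beta> > 0"
    and x1: "continuous_on {0..R} x1" and x2: "continuous_on {0..R} x2"
    and d: "\<And>t. t \<in> {0..R} \<Longrightarrow> \<bar>x1 t - x2 t\<bar> \<le> exp (\<beta> * t) * d"
    and s: "s \<in> {0..R}"
  shows "\<bar>Ex l R x1 s - Ex m R x2 s\<bar> \<le> KK L R * d * exp (\<beta> * s) / \<beta> + R * R * MM (L * R) * \<bar>l - m\<bar> * s"
proof -
  have l0: "l \<ge> 0" and m0: "m \<ge> 0" using l m by auto
  have d0: "d \<ge> 0"
  proof -
    have "\<bar>x1 0 - x2 0\<bar> \<le> d" using d[of 0] R by simp
    then show ?thesis by (meson abs_ge_zero order_trans)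
  qed
  define c0 where "c0 = R * R * MM (L * R) * \<bar>l - m\<bar>"
  define K where "K = KK L R"
  have i1: "(\<lambda>t. Fn l R (x1 t)) integrable_on {0..s}" using Fx_int[OF l0 _ x1] R s by auto
  have i2: "(\<lambda>t. Fn m R (x2 t)) integrable_on {0..s}" using Fx_int[OF m0 _ x2] R s by auto
  have n1: "integral {0..s} (\<lambda>t. Fn l R (x1 t)) \<ge> 0"
    by (rule integral_nonneg[OF i1]) (use Fn_bounds l0 R in auto)
  have n2: "integral {0..s} (\<lambda>t. Fn m R (x2 t)) \<ge> 0"
    by (rule integral_nonneg[OF i2]) (use Fn_bounds m0 R in auto)
  have "\<bar>Ex l R x1 s - Ex m R x2 s\<bar> \<le> \<bar>integral {0..s} (\<lambda>t. Fn l R (x1 t)) - integral {0..s} (\<lambda>t. Fn m R (x2 t))\<bar>"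
    unfolding Ex_def by (rule exp_neg_lip[OF n1 n2])
  also have "\<dots> = norm (integral {0..s} (\<lambda>t. Fn l R (x1 t) - Fn m R (x2 t)))"
    using integral_diff[OF i1 i2] by simp
  also have "\<dots> \<le> integral {0..s} (\<lambda>t. K * d * exp (\<beta> * t) + c0)"
  proof (rule integral_norm_bound_integral)
    show "(\<lambda>t. Fn l R (x1 t) - Fn m R (x2 t)) integrable_on {0..s}" using i1 i2 by (rule integrable_diff)
    show "(\<lambda>t. K * d * exp (\<beta> * t) + c0) integrable_on {0..s}"
      by (intro integrable_continuous_interval continuous_intros)
    fix t assume t: "t \<in> {0..s}"
    have "\<bar>Fn l R (x1 t) - Fn m R (x2 t)\<bar> \<le> K * \<bar>x1 t - x2 t\<bar> + c0"
      unfolding K_def c0_def by (rule Fn_lip[OF l m]) (use R in simp)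
    also have "\<dots> \<le> K * (exp (\<beta> * t) * d) + c0"
      using d[of t] t s KK_nonneg[of L R] l R unfolding K_def
      by (intro add_mono mult_left_mono) auto
    finally show "norm (Fn l R (x1 t) - Fn m R (x2 t)) \<le> K * d * exp (\<beta> * t) + c0"
      by (simp add: algebra_simps)
  qed
  also have "\<dots> = K * d * (exp (\<beta> * s) - 1) / \<beta> + c0 * s"
    using integral_H[OF \<beta>, of s] s by simp
  also have "\<dots> \<le> K * d * exp (\<beta> * s) / \<beta> + c0 * s"
    using KK_nonneg[of L R] l R d0 \<beta> unfolding K_def
    by (intro add_right_mono divide_right_mono mult_left_mono) auto
  finally show ?thesis unfolding K_def c0_def .
qed

lemma S_diff:
  assumes l: "l \<in> {0..L}" and m: "m \<in> {0..L}" and R: "R > 0" and \<beta>: "\<beta> > 0"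
    and x1: "continuous_on {0..R} x1" and x2: "continuous_on {0..R} x2"
    and d: "\<And>t. t \<in> {0..R} \<Longrightarrow> \<bar>x1 t - x2 t\<bar> \<le> exp (\<beta> * t) * d"
    and r: "r \<in> {0..R}"
  shows "\<bar>Sx l R x1 r - Sx m R x2 r\<bar> \<le> r * (KK L R * d * exp (\<beta> * r) / \<beta> + R * R * R * MM (L * R) * \<bar>l - m\<bar>)"
proof (cases "r = 0")
  case True then show ?thesis by (simp add: Sx_def)
next
  case False
  then have rpos: "r > 0" using r by auto
  have l0: "l \<ge> 0" and m0: "m \<ge> 0" using l m by auto
  have d0: "d \<ge> 0"
  proof -
    have "\<bar>x1 0 - x2 0\<bar> \<le> d" using d[of 0] R by simp
    then show ?thesis by (meson abs_ge_zero order_trans)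
  qed
  define C where "C = KK L R * d * exp (\<beta> * r) / \<beta> + R * R * R * MM (L * R) * \<bar>l - m\<bar>"
  have i1: "(\<lambda>s. 2 * s * Ex l R x1 s) integrable_on {0..r}" using Ix_int[OF l0 _ x1] R r by auto
  have i2: "(\<lambda>s. 2 * s * Ex m R x2 s) integrable_on {0..r}" using Ix_int[OF m0 _ x2] R r by auto
  have "\<bar>integral {0..r} (\<lambda>s. 2 * s * Ex l R x1 s) - integral {0..r} (\<lambda>s. 2 * s * Ex m R x2 s)\<bar>
      = norm (integral {0..r} (\<lambda>s. 2 * s * Ex l R x1 s - 2 * s * Ex m R x2 s))"
    using integral_diff[OF i1 i2] by simp
  also have "\<dots> \<le> integral {0..r} (\<lambda>s. 2 * s * C)"
  proof (rule integral_norm_bound_integral)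
    show "(\<lambda>s. 2 * s * Ex l R x1 s - 2 * s * Ex m R x2 s) integrable_on {0..r}" using i1 i2 by (rule integrable_diff)
    show "(\<lambda>s. 2 * s * C) integrable_on {0..r}" by (intro integrable_continuous_interval continuous_intros)
    fix s assume s: "s \<in> {0..r}"
    then have sR: "s \<in> {0..R}" using r by auto
    have "\<bar>Ex l R x1 s - Ex m R x2 s\<bar> \<le> KK L R * d * exp (\<beta> * s) / \<beta> + R * R * MM (L * R) * \<bar>l - m\<bar> * s"
      by (rule E_diff[OF l m R \<beta> x1 x2 d sR])
    also have "\<dots> \<le> C" unfolding C_def
    proof (intro add_mono divide_right_mono mult_left_mono)
      show "exp (\<beta> * s) \<le> exp (\<beta> * r)" using s \<beta> by simp
      show "R * R * MM (L * R) * \<bar>l - m\<bar> * s \<le> R * R * R * MM (L * R) * \<bar>l - m\<bar>"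
      proof -
        have "0 \<le> R * R * MM (L * R) * \<bar>l - m\<bar>" using MM(1)[of "L*R"] l R by simp
        then have "R * R * MM (L * R) * \<bar>l - m\<bar> * s \<le> R * R * MM (L * R) * \<bar>l - m\<bar> * R"
          using sR by (intro mult_left_mono) auto
        then show ?thesis by (simp add: algebra_simps)
      qed
    qed (use KK_nonneg[of L R] l R d0 \<beta> in auto)
    finally have "\<bar>Ex l R x1 s - Ex m R x2 s\<bar> \<le> C" .
    then have "2 * s * \<bar>Ex l R x1 s - Ex m R x2 s\<bar> \<le> 2 * s * C" using s by (intro mult_left_mono) auto
    then show "norm (2 * s * Ex l R x1 s - 2 * s * Ex m R x2 s) \<le> 2 * s * C"
      using s by (simp add: abs_mult right_diff_distrib[symmetric])
  qed
  also have "\<dots> = r\<^sup>2 * C"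
    using integral_2x[of r] r integral_mult_left[of "{0..r}" "\<lambda>s. 2 * s" C] by simp
  finally have "\<bar>integral {0..r} (\<lambda>s. 2 * s * Ex l R x1 s) - integral {0..r} (\<lambda>s. 2 * s * Ex m R x2 s)\<bar> \<le> r\<^sup>2 * C" .
  moreover have "Sx l R x1 r - Sx m R x2 r = (integral {0..r} (\<lambda>s. 2 * s * Ex l R x1 s) - integral {0..r} (\<lambda>s. 2 * s * Ex m R x2 s)) / r"
    using rpos by (simp add: Sx_def diff_divide_distrib)
  ultimately have "\<bar>Sx l R x1 r - Sx m R x2 r\<bar> \<le> r\<^sup>2 * C / r"
    using rpos by (simp add: abs_div divide_right_mono)
  also have "r\<^sup>2 * C / r = r * C" using rpos by (simp add: power2_eq_square)
  finally show ?thesis unfolding C_def .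
qed

end

context phiset begin

lemma exp_cancel: "exp (b*r) * (exp (- (b * r)) * z) = (z::real)" "exp (- (b * r)) * (exp (b*r) * z) = z"
  by (simp_all add: mult.assoc[symmetric] flip: exp_add)

definition Xof :: "real \<Rightarrow> real \<Rightarrow> (real \<Rightarrow> real) \<Rightarrow> real \<Rightarrow> real" where
  "Xof \<beta> R y = (\<lambda>s. exp (\<beta> * cl R s) * y s)"
definition Tf :: "real \<Rightarrow> real \<Rightarrow> real \<Rightarrow> (real \<Rightarrow> real) \<Rightarrow> real \<Rightarrow> real" where
  "Tf l R \<beta> y = (\<lambda>t. exp (- \<beta> * cl R t) * Sx l R (Xof \<beta> R y) (cl R t))"
definition Top :: "real \<Rightarrow> real \<Rightarrow> real \<Rightarrow> (real \<Rightarrow>\<^sub>C real) \<Rightarrow> (real \<Rightarrow>\<^sub>C real)" where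
  "Top l R \<beta> y = Bcontfun (Tf l R \<beta> (apply_bcontfun y))"
definition bet :: "real \<Rightarrow> real \<Rightarrow> real" where
  "bet L R = 2 * R * KK L R + 1"
definition IsFix :: "real \<Rightarrow> real \<Rightarrow> (real \<Rightarrow> real) \<Rightarrow> bool" where
  "IsFix l R x \<longleftrightarrow> continuous_on {0..R} x \<and> (\<forall>r\<in>{0..R}. x r = Sx l R x r)"

lemma Xof_cont: "continuous_on UNIV y \<Longrightarrow> continuous_on S (Xof \<beta> R y)"
  unfolding Xof_def by (intro continuous_intros continuous_on_subset[OF cl_cont]) (auto intro: continuous_on_subset)

lemma Tf_in:
  assumes l: "l \<ge> 0" and R: "R > 0" and \<beta>: "\<beta> \<ge> 0" and y: "continuous_on UNIV y"
  shows "Tf l R \<beta> y \<in> bcontfun"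
proof (rule bcontfun_normI)
  have xc: "continuous_on {0..R} (Xof \<beta> R y)" by (rule Xof_cont[OF y])
  have "continuous_on UNIV (\<lambda>t. Sx l R (Xof \<beta> R y) (cl R t))"
    by (rule continuous_on_compose2[OF Sx_cont[OF l _ xc] cl_cont]) (use R cl_range in auto)
  then show "continuous_on UNIV (Tf l R \<beta> y)" unfolding Tf_def
    by (intro continuous_intros cl_cont)
  fix t
  have c: "cl R t \<in> {0..R}" using cl_range R by auto
  have "0 \<le> Sx l R (Xof \<beta> R y) (cl R t)" "Sx l R (Xof \<beta> R y) (cl R t) \<le> R"
    using Sx_bounds[OF l _ xc c] c R by auto
  moreover have "exp (- \<beta> * cl R t) \<le> 1" using \<beta> c by simp
  ultimately have "exp (- \<beta> * cl R t) * Sx l R (Xof \<beta> R y) (cl R t) \<le> 1 * R"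
    by (intro mult_mono) auto
  moreover have "exp (- \<beta> * cl R t) * Sx l R (Xof \<beta> R y) (cl R t) \<ge> 0"
    using \<open>0 \<le> Sx l R (Xof \<beta> R y) (cl R t)\<close> by simp
  ultimately show "norm (Tf l R \<beta> y t) \<le> R" unfolding Tf_def by simp
qed

lemma Top_apply:
  assumes "l \<ge> 0" "R > 0" "\<beta> \<ge> 0"
  shows "apply_bcontfun (Top l R \<beta> y) = Tf l R \<beta> (apply_bcontfun y)"
  unfolding Top_def by (rule Bcontfun_inverse[OF Tf_in]) (use assms in auto)

lemma Tf_est:
  assumes l: "l \<in> {0..L}" and m: "m \<in> {0..L}" and R: "R > 0" and \<beta>: "\<beta> > 0"
    and y1: "continuous_on UNIV y1" and y2: "continuous_on UNIV y2"
    and d: "\<And>s. \<bar>y1 s - y2 s\<bar> \<le> d"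
  shows "\<bar>Tf l R \<beta> y1 t - Tf m R \<beta> y2 t\<bar> \<le> R * KK L R * d / \<beta> + R^4 * MM (L * R) * \<bar>l - m\<bar>"
proof -
  define r where "r = cl R t"
  have r: "r \<in> {0..R}" using cl_range R r_def by auto
  have d0: "d \<ge> 0" using d[of 0] by (meson abs_ge_zero order_trans)
  have xd: "\<bar>Xof \<beta> R y1 s - Xof \<beta> R y2 s\<bar> \<le> exp (\<beta> * s) * d" if "s \<in> {0..R}" for s
    using that d[of s] by (simp add: Xof_def cl_id right_diff_distrib[symmetric] abs_mult)
  have M0: "MM (L*R) \<ge> 0" using MM(1) l R by simp
  have K0: "KK L R \<ge> 0" using KK_nonneg l R by simp
  have "\<bar>Sx l R (Xof \<beta> R y1) r - Sx m R (Xof \<beta> R y2) r\<bar>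
      \<le> r * (KK L R * d * exp (\<beta> * r) / \<beta> + R * R * R * MM (L * R) * \<bar>l - m\<bar>)"
    by (rule S_diff[OF l m R \<beta> Xof_cont[OF y1] Xof_cont[OF y2] xd r])
  then have "exp (- \<beta> * r) * \<bar>Sx l R (Xof \<beta> R y1) r - Sx m R (Xof \<beta> R y2) r\<bar>
      \<le> exp (- \<beta> * r) * (r * (KK L R * d * exp (\<beta> * r) / \<beta> + R * R * R * MM (L * R) * \<bar>l - m\<bar>))"
    by (rule mult_left_mono) simp
  also have "\<dots> = r * KK L R * d / \<beta> + exp (- \<beta> * r) * r * (R * R * R * MM (L * R) * \<bar>l - m\<bar>)"
  proof -
    have e: "exp (- (\<beta> * r)) * exp (\<beta> * r) = 1" by (simp flip: exp_add)
    show ?thesis by (simp add: distrib_left mult.assoc mult.left_commute[of "exp (- \<beta> * r)"] e)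
  qed
  also have "\<dots> \<le> R * KK L R * d / \<beta> + 1 * R * (R * R * R * MM (L * R) * \<bar>l - m\<bar>)"
  proof (intro add_mono divide_right_mono mult_right_mono mult_mono)
    show "exp (- \<beta> * r) \<le> 1" using r \<beta> by simp
  qed (use r K0 d0 \<beta> M0 R in auto)
  also have "\<dots> = R * KK L R * d / \<beta> + R^4 * MM (L * R) * \<bar>l - m\<bar>"
    by (simp add: power4_eq_xxxx)
  finally show ?thesis unfolding Tf_def r_def[symmetric]
    by (simp add: right_diff_distrib[symmetric] abs_mult)
qed

lemma Top_dist:
  assumes l: "l \<in> {0..L}" and m: "m \<in> {0..L}" and R: "R > 0" and \<beta>: "\<beta> > 0"
  shows "dist (Top l R \<beta> y1) (Top m R \<beta> y2) \<le> R * KK L R * dist y1 y2 / \<beta> + R^4 * MM (L * R) * \<bar>l - m\<bar>"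
proof (rule dist_bound)
  fix t
  have "\<bar>Tf l R \<beta> (apply_bcontfun y1) t - Tf m R \<beta> (apply_bcontfun y2) t\<bar> \<le> R * KK L R * dist y1 y2 / \<beta> + R^4 * MM (L * R) * \<bar>l - m\<bar>"
    by (rule Tf_est[OF l m R \<beta>]) (auto simp: dist_real_def[symmetric] intro: dist_bounded)
  then show "dist (apply_bcontfun (Top l R \<beta> y1) t) (apply_bcontfun (Top m R \<beta> y2) t) \<le> R * KK L R * dist y1 y2 / \<beta> + R^4 * MM (L * R) * \<bar>l - m\<bar>"
    using Top_apply l m R \<beta> by (simp add: dist_real_def)
qed

lemma bet_pos: "L \<ge> 0 \<Longrightarrow> R > 0 \<Longrightarrow> bet L R > 0"
  unfolding bet_def using KK_nonneg[of L R] by (intro add_nonneg_pos mult_nonneg_nonneg) auto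

lemma contr_const:
  assumes "L \<ge> 0" "R > 0" "D \<ge> 0"
  shows "R * KK L R * D / bet L R \<le> D / 2"
proof -
  have K: "KK L R \<ge> 0" using KK_nonneg assms by simp
  have b: "bet L R > 0" using bet_pos assms by simp
  have "R * KK L R * D \<le> D / 2 * bet L R" unfolding bet_def using assms K
    by (simp add: algebra_simps)
  then show ?thesis unfolding pos_divide_le_eq[OF b] .
qed

lemma Top_contr:
  assumes l: "l \<in> {0..L}" and R: "R > 0"
  shows "dist (Top l R (bet L R) y1) (Top l R (bet L R) y2) \<le> (1/2) * dist y1 y2"
proof -
  have b: "bet L R > 0" using bet_pos l R by simp
  have "dist (Top l R (bet L R) y1) (Top l R (bet L R) y2) \<le> R * KK L R * dist y1 y2 / bet L R"
    using Top_dist[OF l l R b, of y1 y2] by simp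
  moreover have "R * KK L R * dist y1 y2 / bet L R \<le> dist y1 y2 / 2"
    using contr_const[of L R "dist y1 y2"] l R by simp
  ultimately show ?thesis by linarith
qed

lemma Ex_cong:
  assumes "\<And>t. t \<in> {0..R} \<Longrightarrow> x1 t = x2 t" "s \<in> {0..R}"
  shows "Ex l R x1 s = Ex l R x2 s"
  unfolding Ex_def using assms by (auto intro!: integral_cong)

lemma Sx_cong:
  assumes "\<And>t. t \<in> {0..R} \<Longrightarrow> x1 t = x2 t" "r \<in> {0..R}"
  shows "Sx l R x1 r = Sx l R x2 r"
  unfolding Sx_def using assms by (auto intro!: integral_cong Ex_cong)

lemma fix_IsFix:
  assumes l: "l \<ge> 0" and R: "R > 0" and \<beta>: "\<beta> \<ge> 0" and fx: "Top l R \<beta> y = y"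
  shows "IsFix l R (Xof \<beta> R (apply_bcontfun y))"
  unfolding IsFix_def
proof
  show "continuous_on {0..R} (Xof \<beta> R (apply_bcontfun y))" by (rule Xof_cont) simp
  show "\<forall>r\<in>{0..R}. Xof \<beta> R (apply_bcontfun y) r = Sx l R (Xof \<beta> R (apply_bcontfun y)) r"
  proof
    fix r assume r: "r \<in> {0..R}"
    have "apply_bcontfun y r = Tf l R \<beta> (apply_bcontfun y) r"
      using Top_apply[OF l R \<beta>, of y] fx by simp
    then show "Xof \<beta> R (apply_bcontfun y) r = Sx l R (Xof \<beta> R (apply_bcontfun y)) r"
      unfolding Xof_def Tf_def using r by (simp add: cl_id exp_cancel)
  qed
qed

lemma IsFix_bounds:
  assumes l: "l \<ge> 0" and R: "R > 0" and x: "IsFix l R x" and r: "r \<in> {0..R}"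
  shows "0 \<le> x r" "x r \<le> r"
  using Sx_bounds[OF l _ _ r] x r R unfolding IsFix_def by auto

lemma IsFix_fix:
  assumes l: "l \<ge> 0" and R: "R > 0" and \<beta>: "\<beta> \<ge> 0" and x: "IsFix l R x"
  obtains y where "Top l R \<beta> y = y" "\<And>r. r \<in> {0..R} \<Longrightarrow> x r = exp (\<beta> * r) * apply_bcontfun y r"
proof -
  define g where "g = (\<lambda>t. exp (- \<beta> * cl R t) * x (cl R t))"
  have xc: "continuous_on {0..R} x" using x unfolding IsFix_def by simp
  have gin: "g \<in> bcontfun"
  proof (rule bcontfun_normI)
    show "continuous_on UNIV g" unfolding g_def
      by (intro continuous_intros cl_cont continuous_on_compose2[OF xc cl_cont]) (use cl_range R in auto)
    fix t
    have c: "cl R t \<in> {0..R}" using cl_range R by auto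
    have "0 \<le> x (cl R t)" "x (cl R t) \<le> R" using IsFix_bounds[OF l R x c] c by auto
    moreover have "exp (- \<beta> * cl R t) \<le> 1" using \<beta> c by simp
    ultimately have "exp (- \<beta> * cl R t) * x (cl R t) \<le> 1 * R"
      by (intro mult_mono) auto
    moreover have "exp (- \<beta> * cl R t) * x (cl R t) \<ge> 0"
      using \<open>0 \<le> x (cl R t)\<close> by simp
    ultimately show "norm (g t) \<le> R" unfolding g_def by simp
  qed
  define y where "y = Bcontfun g"
  have ya: "apply_bcontfun y = g" unfolding y_def using gin by (simp add: Bcontfun_inverse)
  have xo: "Xof \<beta> R g t = x t" if "t \<in> {0..R}" for t
    using that by (simp add: Xof_def g_def cl_id exp_cancel)
  have "Top l R \<beta> y = y"
  proof (rule bcontfun_eqI)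
    fix t
    have c: "cl R t \<in> {0..R}" using cl_range R by auto
    have "Sx l R (Xof \<beta> R g) (cl R t) = Sx l R x (cl R t)" by (rule Sx_cong[OF xo c])
    also have "\<dots> = x (cl R t)" using x c unfolding IsFix_def by simp
    finally show "apply_bcontfun (Top l R \<beta> y) t = apply_bcontfun y t"
      using Top_apply[OF l R \<beta>] ya by (simp add: Tf_def g_def)
  qed
  moreover have "x r = exp (\<beta> * r) * apply_bcontfun y r" if "r \<in> {0..R}" for r
    using that ya by (simp add: g_def cl_id exp_cancel)
  ultimately show ?thesis using that by blast
qed

lemma IsFix_exists:
  assumes l: "l \<ge> 0" and R: "R > 0"
  shows "\<exists>x. IsFix l R x"
proof -
  have c: "\<forall>x y. dist (Top l R (bet l R) x) (Top l R (bet l R) y) \<le> 1/2 * dist x y"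
    using Top_contr[of l l R] l R by simp
  have "\<exists>!y. Top l R (bet l R) y = y"
    using banach_fix_type[of "1/2" "Top l R (bet l R)"] c by simp
  then obtain y where y: "Top l R (bet l R) y = y" by blast
  have b: "bet l R \<ge> 0" using bet_pos[of l R] l R by simp
  have "IsFix l R (Xof (bet l R) R (apply_bcontfun y))" by (rule fix_IsFix[OF l R b y])
  then show ?thesis by blast
qed

lemma IsFix_param:
  assumes l: "l \<in> {0..L}" and m: "m \<in> {0..L}" and R: "R > 0"
    and x1: "IsFix l R x1" and x2: "IsFix m R x2" and r: "r \<in> {0..R}"
  shows "\<bar>x1 r - x2 r\<bar> \<le> exp (bet L R * R) * (2 * R^4 * MM (L * R)) * \<bar>l - m\<bar>"
proof -
  have L: "L \<ge> 0" using l by simp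
  define \<beta> where "\<beta> = bet L R"
  have \<beta>: "\<beta> > 0" using bet_pos L R \<beta>_def by simp
  obtain y1 where y1: "Top l R \<beta> y1 = y1" "\<And>r. r \<in> {0..R} \<Longrightarrow> x1 r = exp (\<beta> * r) * apply_bcontfun y1 r"
    using IsFix_fix[OF _ R _ x1, of \<beta>] l \<beta> by auto
  obtain y2 where y2: "Top m R \<beta> y2 = y2" "\<And>r. r \<in> {0..R} \<Longrightarrow> x2 r = exp (\<beta> * r) * apply_bcontfun y2 r"
    using IsFix_fix[OF _ R _ x2, of \<beta>] m \<beta> by auto
  have "dist y1 y2 = dist (Top l R \<beta> y1) (Top m R \<beta> y2)" using y1 y2 by simp
  also have "\<dots> \<le> R * KK L R * dist y1 y2 / \<beta> + R^4 * MM (L * R) * \<bar>l - m\<bar>"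
    by (rule Top_dist[OF l m R \<beta>])
  also have "\<dots> \<le> dist y1 y2 / 2 + R^4 * MM (L * R) * \<bar>l - m\<bar>"
    using contr_const[OF L R, of "dist y1 y2"] \<beta>_def by simp
  finally have dy: "dist y1 y2 \<le> 2 * R^4 * MM (L * R) * \<bar>l - m\<bar>" by simp
  have "\<bar>x1 r - x2 r\<bar> = exp (\<beta> * r) * dist (apply_bcontfun y1 r) (apply_bcontfun y2 r)"
    using y1(2)[OF r] y2(2)[OF r] by (simp add: dist_real_def right_diff_distrib[symmetric] abs_mult)
  also have "\<dots> \<le> exp (\<beta> * R) * (2 * R^4 * MM (L * R) * \<bar>l - m\<bar>)"
    using r \<beta> dy dist_bounded[of y1 r y2] by (intro mult_mono) auto
  finally show ?thesis unfolding \<beta>_def by (simp add: mult.assoc)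
qed

lemma IsFix_unique:
  assumes l: "l \<ge> 0" and R: "R > 0"
    and x1: "IsFix l R x1" and x2: "IsFix l R x2" and r: "r \<in> {0..R}"
  shows "x1 r = x2 r"
  using IsFix_param[OF _ _ R x1 x2 r, of l] l by simp

end

context phiset begin

lemma IsFix_restrict:
  assumes l: "l \<ge> 0" and R1: "R1 > 0" and R12: "R1 \<le> R2" and x: "IsFix l R2 x"
  shows "IsFix l R1 x"
  unfolding IsFix_def
proof
  have R2: "R2 > 0" using R1 R12 by simp
  show "continuous_on {0..R1} x" using x R12 unfolding IsFix_def by (auto intro: continuous_on_subset)
  have Fe: "Fn l R1 (x t) = Fn l R2 (x t)" if t: "t \<in> {0..R1}" for t
  proof -
    have "t \<in> {0..R2}" using t R12 by auto
    then have b: "0 \<le> x t" "x t \<le> t" using IsFix_bounds[OF l R2 x] by auto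
    then show ?thesis using Fn_eq[of "x t" R1 l] Fn_eq[of "x t" R2 l] t R12 by auto
  qed
  have Ee: "Ex l R1 x s = Ex l R2 x s" if s: "s \<in> {0..R1}" for s
    unfolding Ex_def using s Fe by (auto intro!: integral_cong)
  show "\<forall>r\<in>{0..R1}. x r = Sx l R1 x r"
  proof
    fix r assume r: "r \<in> {0..R1}"
    have "Sx l R1 x r = Sx l R2 x r" unfolding Sx_def using r Ee by (auto intro!: integral_cong)
    also have "\<dots> = x r" using x r R12 unfolding IsFix_def by auto
    finally show "x r = Sx l R1 x r" by simp
  qed
qed

definition sol :: "real \<Rightarrow> real \<Rightarrow> real \<Rightarrow> real" where
  "sol l R = (SOME x. IsFix l R x)"
definition X :: "real \<Rightarrow> real \<Rightarrow> real" where
  "X l t = sol l (t + 1) t"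
definition U :: "real \<Rightarrow> real \<Rightarrow> real" where
  "U l t = t * X l t"
definition G :: "real \<Rightarrow> real \<Rightarrow> real" where
  "G l t = X l t * phi (l * X l t)"
definition EE :: "real \<Rightarrow> real \<Rightarrow> real" where
  "EE l s = exp (- integral {0..s} (G l))"

lemma sol_IsFix: "l \<ge> 0 \<Longrightarrow> R > 0 \<Longrightarrow> IsFix l R (sol l R)"
  unfolding sol_def using IsFix_exists by (metis someI_ex)

lemma sol_X:
  assumes l: "l \<ge> 0" and R: "R > 0" and t: "t \<in> {0..R}"
  shows "sol l R t = X l t"
proof -
  define R0 where "R0 = min R (t + 1)"
  have R0: "R0 > 0" "R0 \<le> R" "R0 \<le> t + 1" using R t by (auto simp: R0_def)
  have tR0: "t \<in> {0..R0}" using t by (auto simp: R0_def)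
  have a: "IsFix l R0 (sol l R)" by (rule IsFix_restrict[OF l R0(1,2) sol_IsFix[OF l R]])
  have b: "IsFix l R0 (sol l (t+1))" by (rule IsFix_restrict[OF l R0(1,3) sol_IsFix]) (use l t in auto)
  show ?thesis unfolding X_def using IsFix_unique[OF l R0(1) a b tR0] .
qed

lemma X_bounds: assumes "l \<ge> 0" "t \<ge> 0" shows "0 \<le> X l t" "X l t \<le> t"
  using IsFix_bounds[OF assms(1) _ sol_IsFix[OF assms(1)], of "t+1" t] assms
  unfolding X_def by auto

lemma X_cont: assumes l: "l \<ge> 0" shows "continuous_on {0..} (X l)"
proof (rule cont_on_nonneg)
  fix R :: real assume R: "R > 0"
  have "continuous_on {0..R} (sol l R)" using sol_IsFix[OF l R] unfolding IsFix_def by simp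
  then show "continuous_on {0..R} (X l)"
    by (rule continuous_on_cong[THEN iffD1, rotated 2]) (use sol_X[OF l R] in auto)
qed

lemma G_cont: assumes l: "l \<ge> 0" shows "continuous_on {0..} (G l)"
proof -
  have "continuous_on {0..} (\<lambda>t. phi (l * X l t))"
    by (rule continuous_on_compose2[OF cont]) (use X_cont[OF l] X_bounds[OF l] l in \<open>auto intro!: continuous_intros\<close>)
  then show ?thesis unfolding G_def using X_cont[OF l] by (intro continuous_intros)
qed

lemma G_nonneg: "l \<ge> 0 \<Longrightarrow> t \<ge> 0 \<Longrightarrow> G l t \<ge> 0"
  unfolding G_def using X_bounds[of l t] nonneg[of "l * X l t"] by simp

lemma Fn_sol:
  assumes l: "l \<ge> 0" and R: "R > 0" and t: "t \<in> {0..R}"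
  shows "Fn l R (sol l R t) = G l t"
proof -
  have "0 \<le> sol l R t" "sol l R t \<le> t" using IsFix_bounds[OF l R sol_IsFix[OF l R] t] by auto
  then show ?thesis using Fn_eq[of "sol l R t" R l] t sol_X[OF l R t] by (auto simp: G_def)
qed

lemma Ex_sol:
  assumes l: "l \<ge> 0" and R: "R > 0" and s: "s \<in> {0..R}"
  shows "Ex l R (sol l R) s = EE l s"
  unfolding Ex_def EE_def using s Fn_sol[OF l R] by (auto intro!: integral_cong)

lemma EE_bounds: assumes l: "l \<ge> 0" and s: "s \<ge> 0" shows "0 < EE l s" "EE l s \<le> 1"
  using Ex_bounds[OF l _ _, of "s+1" "sol l (s+1)" s] sol_IsFix[OF l, of "s+1"] Ex_sol[OF l, of "s+1" s] s
  unfolding IsFix_def by auto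

lemma EE0: "EE l 0 = 1" by (simp add: EE_def)

lemma EE_cont: assumes l: "l \<ge> 0" shows "continuous_on {0..} (EE l)"
proof (rule cont_on_nonneg)
  fix R :: real assume R: "R > 0"
  have "continuous_on {0..R} (\<lambda>s. integral {0..s} (G l))"
    by (rule indefinite_integral_continuous_1, rule integrable_continuous_interval)
       (use G_cont[OF l] in \<open>auto intro: continuous_on_subset\<close>)
  then show "continuous_on {0..R} (EE l)" unfolding EE_def by (intro continuous_intros)
qed

lemma U_int:
  assumes l: "l \<ge> 0" and r: "r \<ge> 0"
  shows "U l r = integral {0..r} (\<lambda>s. 2 * s * EE l s)"
proof (cases "r = 0")
  case True then show ?thesis by (simp add: U_def)
next
  case False
  then have rp: "r > 0" using r by simp
  define R where "R = r + 1"
  have R: "R > 0" "r \<in> {0..R}" using r by (auto simp: R_def)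
  have "X l r = Sx l R (sol l R) r" using sol_IsFix[OF l R(1)] R sol_X[OF l R] unfolding IsFix_def by auto
  also have "\<dots> = integral {0..r} (\<lambda>s. 2 * s * Ex l R (sol l R) s) / r" using rp by (simp add: Sx_def)
  also have "integral {0..r} (\<lambda>s. 2 * s * Ex l R (sol l R) s) = integral {0..r} (\<lambda>s. 2 * s * EE l s)"
    using Ex_sol[OF l R(1)] R by (auto intro!: integral_cong)
  finally show ?thesis using rp by (simp add: U_def)
qed

lemma U_cont: assumes l: "l \<ge> 0" shows "continuous_on {0..} (U l)"
  unfolding U_def using X_cont[OF l] by (intro continuous_intros)

lemma U_bounds: assumes "l \<ge> 0" "t \<ge> 0" shows "0 \<le> U l t" "U l t \<le> t\<^sup>2"
  using X_bounds[OF assms] assms unfolding U_def by (auto simp: power2_eq_square intro: mult_left_mono)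

lemma U0: "U l 0 = 0" by (simp add: U_def)

lemma G_eq: "r > 0 \<Longrightarrow> G l r = (U l r / r) * phi (l * (U l r / r))"
  by (simp add: G_def U_def)

lemma U_deriv_within:
  assumes l: "l \<ge> 0" and r: "r \<ge> 0"
  shows "(U l has_real_derivative 2 * r * EE l r) (at r within {0..r+1})"
proof -
  have c: "continuous_on {0..r+1} (\<lambda>s. 2 * s * EE l s)"
    using EE_cont[OF l] by (intro continuous_intros) (auto intro: continuous_on_subset)
  have "((\<lambda>x. integral {0..x} (\<lambda>s. 2 * s * EE l s)) has_real_derivative 2 * r * EE l r) (at r within {0..r+1})"
    using integral_has_real_derivative[OF c] r by simp
  then show ?thesis
    by (rule has_field_derivative_transform_within[of _ _ _ _ 1]) (use U_int[OF l] r in auto)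
qed

lemma U_deriv0:
  assumes l: "l \<ge> 0" and r: "r \<ge> 0"
  shows "(U l has_real_derivative 2 * r * EE l r) (at r within {0..})"
proof -
  have "at r within {0..r+1} = at r within {0..}"
    by (rule at_within_nhd[of _ "{..<r+1}"]) (auto simp: r)
  then show ?thesis using U_deriv_within[OF l r] by simp
qed

lemma U_deriv:
  assumes l: "l \<ge> 0" and r: "r > 0"
  shows "(U l has_real_derivative 2 * r * EE l r) (at r)"
  using U_deriv_within[OF l, of r] r at_within_Icc_at[of 0 r "r+1"] by simp

lemma EE_deriv:
  assumes l: "l \<ge> 0" and r: "r > 0"
  shows "(EE l has_real_derivative - G l r * EE l r) (at r)"
proof -
  have c: "continuous_on {0..r+1} (G l)" using G_cont[OF l] by (auto intro: continuous_on_subset)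
  have "((\<lambda>x. integral {0..x} (G l)) has_real_derivative G l r) (at r within {0..r+1})"
    using integral_has_real_derivative[OF c] r by simp
  then have d: "((\<lambda>x. integral {0..x} (G l)) has_real_derivative G l r) (at r)"
    using r at_within_Icc_at[of 0 r "r+1"] by simp
  show ?thesis unfolding EE_def
    by (rule derivative_eq_intros d | simp)+
qed

end

context phiset begin

lemma A_nonneg: "A \<ge> 0" using Abd[of 0] by simp

lemma U_cont_sub: "l \<ge> 0 \<Longrightarrow> a \<ge> 0 \<Longrightarrow> continuous_on {a..b} (U l)"
  using U_cont by (rule continuous_on_subset) auto
lemma EE_cont_sub: "l \<ge> 0 \<Longrightarrow> a \<ge> 0 \<Longrightarrow> continuous_on {a..b} (EE l)"
  using EE_cont by (rule continuous_on_subset) auto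

lemma U_mono:
  assumes l: "l \<ge> 0" and a: "0 \<le> a" and ab: "a \<le> b"
  shows "U l a \<le> U l b"
proof (rule mono_deriv[OF ab U_cont_sub[OF l a]])
  fix x assume x: "a < x" "x < b"
  then show "(U l has_real_derivative 2 * x * EE l x) (at x)" using U_deriv[OF l] a by simp
  show "0 \<le> 2 * x * EE l x" using EE_bounds[OF l, of x] x a by simp
qed

lemma EE_anti:
  assumes l: "l \<ge> 0" and a: "0 \<le> a" and ab: "a \<le> b"
  shows "EE l b \<le> EE l a"
proof -
  have "- EE l a \<le> - EE l b"
  proof (rule mono_deriv[OF ab, of "\<lambda>x. - EE l x" "\<lambda>x. G l x * EE l x"])
    show "continuous_on {a..b} (\<lambda>x. - EE l x)" using EE_cont_sub[OF l a] by (intro continuous_intros)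
    fix x assume x: "a < x" "x < b"
    then show "((\<lambda>x. - EE l x) has_real_derivative G l x * EE l x) (at x)"
      using DERIV_minus[OF EE_deriv[OF l, of x]] a by simp
    show "0 \<le> G l x * EE l x" using EE_bounds[OF l, of x] G_nonneg[OF l, of x] x a by simp
  qed
  then show ?thesis by simp
qed

lemma U_lower:
  assumes l: "l \<ge> 0" and a: "0 \<le> a" and ab: "a \<le> b"
  shows "EE l b * (b\<^sup>2 - a\<^sup>2) \<le> U l b - U l a"
proof -
  have "U l a - EE l b * a\<^sup>2 \<le> U l b - EE l b * b\<^sup>2"
  proof (rule mono_deriv[OF ab, of _ "\<lambda>x. 2 * x * EE l x - EE l b * (2 * x)"])
    show "continuous_on {a..b} (\<lambda>x. U l x - EE l b * x\<^sup>2)" using U_cont_sub[OF l a] by (intro continuous_intros)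
    fix x assume x: "a < x" "x < b"
    show "((\<lambda>x. U l x - EE l b * x\<^sup>2) has_real_derivative 2 * x * EE l x - EE l b * (2 * x)) (at x)"
      using x a by (auto intro!: derivative_eq_intros U_deriv[OF l])
    have "EE l b \<le> EE l x" using EE_anti[OF l _ , of x b] x a by simp
    then show "0 \<le> 2 * x * EE l x - EE l b * (2 * x)" using x a
      by (simp add: algebra_simps mult_left_mono)
  qed
  then show ?thesis by (simp add: algebra_simps)
qed

lemma lG_le: assumes l: "l \<ge> 0" and t: "t \<ge> 0" shows "l * G l t \<le> A"
  using Abd[of "l * X l t"] X_bounds[OF l t] l unfolding G_def by (simp add: mult.assoc)

lemma EE_low:
  assumes l: "l > 0" and s: "s \<ge> 0"
  shows "exp (- A * s / l) \<le> EE l s"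
proof -
  have l0: "l \<ge> 0" using l by simp
  have "EE l 0 * exp (A * 0 / l) \<le> EE l s * exp (A * s / l)"
  proof (rule mono_deriv[OF s, of _ "\<lambda>x. EE l x * exp (A * x / l) * (A / l - G l x)"])
    show "continuous_on {0..s} (\<lambda>x. EE l x * exp (A * x / l))" using EE_cont_sub[of l 0 s] l0 l by (intro continuous_intros) auto
    fix x assume x: "0 < x" "x < s"
    show "((\<lambda>x. EE l x * exp (A * x / l)) has_real_derivative EE l x * exp (A * x / l) * (A / l - G l x)) (at x)"
      using x l by (auto intro!: derivative_eq_intros EE_deriv[OF l0] simp: algebra_simps)
    have "G l x \<le> A / l" using lG_le[OF l0, of x] x l by (simp add: pos_le_divide_eq mult.commute)
    then show "0 \<le> EE l x * exp (A * x / l) * (A / l - G l x)" using EE_bounds[OF l0, of x] x by simp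
  qed
  then have "1 \<le> EE l s * exp (A * s / l)" by (simp add: EE0)
  then show ?thesis by (simp add: exp_minus field_simps)
qed

lemma U_large:
  assumes l: "l > 0" and r: "r \<ge> 0"
  shows "r\<^sup>2 * exp (- A * r / l) \<le> U l r"
proof -
  have l0: "l \<ge> 0" using l by simp
  define c where "c = exp (- A * r / l)"
  have "U l 0 - c * 0\<^sup>2 \<le> U l r - c * r\<^sup>2"
  proof (rule mono_deriv[OF r, of _ "\<lambda>x. 2 * x * EE l x - c * (2 * x)"])
    show "continuous_on {0..r} (\<lambda>x. U l x - c * x\<^sup>2)" using U_cont_sub[OF l0, of 0 r] by (intro continuous_intros) auto
    fix x assume x: "0 < x" "x < r"
    show "((\<lambda>x. U l x - c * x\<^sup>2) has_real_derivative 2 * x * EE l x - c * (2 * x)) (at x)"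
      using x by (auto intro!: derivative_eq_intros U_deriv[OF l0])
    have "c \<le> exp (- A * x / l)" unfolding c_def using x l A_nonneg
      by (simp add: divide_right_mono mult_left_mono)
    also have "\<dots> \<le> EE l x" using EE_low[OF l, of x] x by simp
    finally show "0 \<le> 2 * x * EE l x - c * (2 * x)" using x by (simp add: algebra_simps mult_left_mono)
  qed
  then show ?thesis by (simp add: U0 c_def mult.commute)
qed

lemma U_zero_bound:
  assumes r: "r \<ge> 0"
  shows "U 0 r \<le> 4 / phi 0"
proof -
  define Q where "Q = (\<lambda>x. 2 * x\<^sup>2 * EE 0 x - 2 * U 0 x + phi 0 * (U 0 x)\<^sup>2 / 2)"
  have Qc: "continuous_on {0..r} Q" unfolding Q_def
    using U_cont_sub[of 0 0 r] EE_cont_sub[of 0 0 r] by (intro continuous_intros) auto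
  have Qd: "(Q has_real_derivative 0) (at x)" if x: "x > 0" for x
  proof -
    have dU: "(U 0 has_real_derivative 2 * x * EE 0 x) (at x)" using U_deriv[of 0 x] x by simp
    have dE: "(EE 0 has_real_derivative - G 0 x * EE 0 x) (at x)" using EE_deriv[of 0 x] x by simp
    have "(Q has_real_derivative (2 * (2 * x) * EE 0 x + 2 * x\<^sup>2 * (- G 0 x * EE 0 x)) - 2 * (2 * x * EE 0 x)
        + phi 0 * (2 * U 0 x * (2 * x * EE 0 x)) / 2) (at x)"
    proof -
      have d1: "((\<lambda>x. 2 * x\<^sup>2 * EE 0 x) has_real_derivative 2 * (2 * x) * EE 0 x + 2 * x\<^sup>2 * (- G 0 x * EE 0 x)) (at x)"
        using DERIV_mult[OF DERIV_cmult[OF DERIV_pow[of 2 x]] dE, of 2] by (simp add: power2_eq_square algebra_simps)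
      have d2: "((\<lambda>x. 2 * U 0 x) has_real_derivative 2 * (2 * x * EE 0 x)) (at x)"
        using DERIV_cmult[OF dU, of 2] by simp
      have d3: "((\<lambda>x. phi 0 * (U 0 x)\<^sup>2 / 2) has_real_derivative phi 0 * (2 * U 0 x * (2 * x * EE 0 x)) / 2) (at x)"
        using DERIV_cdivide[OF DERIV_cmult[OF DERIV_mult[OF dU dU]], of "phi 0" 2]
        by (simp add: power2_eq_square algebra_simps)
      show ?thesis unfolding Q_def by (rule DERIV_add[OF DERIV_diff[OF d1 d2] d3])
    qed
    moreover have "G 0 x = U 0 x / x * phi 0" using G_eq[OF x, of 0] by simp
    ultimately show ?thesis using x by (simp add: power2_eq_square algebra_simps)
  qed
  have "Q 0 \<le> Q r" by (rule mono_deriv[OF r Qc Qd]) auto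
  have Qd': "((\<lambda>a. - Q a) has_real_derivative 0) (at x)" if "x > 0" for x
    using DERIV_minus[OF Qd[OF that]] by simp
  have "- Q 0 \<le> - Q r"
    by (rule mono_deriv[OF r, of _ "\<lambda>x. 0"]) (use Qc Qd' in \<open>auto intro: continuous_intros\<close>)
  with \<open>Q 0 \<le> Q r\<close> have "Q r = Q 0" by simp
  also have "Q 0 = 0" by (simp add: Q_def U0)
  finally have q: "2 * r\<^sup>2 * EE 0 r - 2 * U 0 r + phi 0 * (U 0 r)\<^sup>2 / 2 = 0" by (simp add: Q_def)
  have "0 \<le> 2 * r\<^sup>2 * EE 0 r" using EE_bounds[of 0 r] r by simp
  then have k: "(phi 0 * U 0 r) * U 0 r \<le> 4 * U 0 r" using q by (simp add: power2_eq_square algebra_simps)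
  have U0r: "U 0 r \<ge> 0" using U_bounds[of 0 r] r by simp
  show ?thesis
  proof (cases "U 0 r = 0")
    case True then show ?thesis using pos0 by simp
  next
    case False
    then have "U 0 r > 0" using U0r by simp
    then have "phi 0 * U 0 r \<le> 4" using k by (simp add: mult_le_cancel_right_pos)
    then show ?thesis using pos0 by (simp add: pos_le_divide_eq mult.commute)
  qed
qed

lemma bounded_gt:
  assumes l: "l \<ge> 0" and bd: "\<And>r. r \<ge> 0 \<Longrightarrow> U l r \<le> L"
  shows "L * phi 0 > 2"
proof (rule ccontr)
  assume "\<not> L * phi 0 > 2"
  then have L2: "L * phi 0 \<le> 2" by simp
  have Gb: "x * G l x \<le> 2" if x: "x > 0" for x
  proof -
    have "x * G l x = U l x * phi (l * (U l x / x))" using G_eq[OF x, of l] x by simp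
    also have "\<dots> \<le> L * phi 0"
      using bd[of x] x U_bounds[OF l, of x] le0[of "l * (U l x / x)"] nonneg[of "l * (U l x / x)"] l
      by (intro mult_mono) auto
    finally show ?thesis using L2 by simp
  qed
  define e where "e = EE l 1"
  have e: "e > 0" using EE_bounds[OF l, of 1] e_def by simp
  have Elow: "e \<le> EE l x * x\<^sup>2" if x: "x \<ge> 1" for x
  proof -
    have "EE l 1 * 1\<^sup>2 \<le> EE l x * x\<^sup>2"
    proof (rule mono_deriv[OF x, of _ "\<lambda>x. x * EE l x * (2 - x * G l x)"])
      show "continuous_on {1..x} (\<lambda>x. EE l x * x\<^sup>2)" using EE_cont_sub[OF l, of 1 x] by (intro continuous_intros) auto
      fix y assume y: "1 < y" "y < x"
      show "((\<lambda>x. EE l x * x\<^sup>2) has_real_derivative y * EE l y * (2 - y * G l y)) (at y)"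
        using y by (auto intro!: derivative_eq_intros EE_deriv[OF l] simp: power2_eq_square algebra_simps)
      show "0 \<le> y * EE l y * (2 - y * G l y)" using Gb[of y] y EE_bounds[OF l, of y] by simp
    qed
    then show ?thesis by (simp add: e_def)
  qed
  have Ulow: "U l 1 + 2 * e * ln x \<le> U l x" if x: "x \<ge> 1" for x
  proof -
    have "U l 1 - 2 * e * ln 1 \<le> U l x - 2 * e * ln x"
    proof (rule mono_deriv[OF x, of _ "\<lambda>x. 2 * x * EE l x - 2 * e * (1 / x)"])
      show "continuous_on {1..x} (\<lambda>x. U l x - 2 * e * ln x)" using U_cont_sub[OF l, of 1 x]
        by (intro continuous_intros) auto
      fix y assume y: "1 < y" "y < x"
      show "((\<lambda>x. U l x - 2 * e * ln x) has_real_derivative 2 * y * EE l y - 2 * e * (1 / y)) (at y)"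
        using y by (auto intro!: derivative_eq_intros U_deriv[OF l])
      have "e \<le> EE l y * y\<^sup>2" using Elow[of y] y by simp
      then have "e / y \<le> y * EE l y" using y by (simp add: divide_le_eq power2_eq_square algebra_simps)
      then show "0 \<le> 2 * y * EE l y - 2 * e * (1 / y)" by simp
    qed
    then show ?thesis by simp
  qed
  define x where "x = exp ((L + 1) / (2 * e))"
  have L0: "L \<ge> 0" using bd[of 0] U0 by simp
  have x1: "x \<ge> 1" unfolding x_def using L0 e by simp
  have "U l 1 + 2 * e * ln x \<le> U l x" by (rule Ulow[OF x1])
  moreover have "2 * e * ln x = L + 1" unfolding x_def using e by simp
  moreover have "U l 1 \<ge> 0" using U_bounds[OF l, of 1] by simp
  ultimately have "U l x \<ge> L + 1" by simp
  then show False using bd[of x] x1 by simp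
qed

end

context phiset begin

definition Trap :: "real \<Rightarrow> real \<Rightarrow> real \<Rightarrow> bool" where
  "Trap b l r0 \<longleftrightarrow> r0 > 0 \<and> (\<exists>k x0. k > 2 \<and> x0 > 0 \<and> (\<forall>y\<in>{0..x0}. k \<le> U l r0 * phi y)
     \<and> U l r0 + 8 * (U l r0 - U l (r0/2)) / (3 * (k - 2)) < b \<and> l * b < x0 * r0)"

lemma trap_bound:
  assumes l: "l \<ge> 0" and T: "Trap b l r0" and r: "r \<ge> 0"
  shows "U l r < b"
proof -
  obtain k x0 where r0: "r0 > 0" and k: "k > 2" and x0: "x0 > 0"
    and ky: "\<And>y. y \<in> {0..x0} \<Longrightarrow> k \<le> U l r0 * phi y"
    and B: "U l r0 + 8 * (U l r0 - U l (r0/2)) / (3 * (k - 2)) < b"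
    and xb: "l * b < x0 * r0"
    using T unfolding Trap_def by blast
  define g where "g = (\<lambda>s. U l s + 2 * EE l s * s\<^sup>2 / (k - 2))"
  have "EE l r0 * (r0\<^sup>2 - (r0/2)\<^sup>2) \<le> U l r0 - U l (r0/2)"
    by (rule U_lower[OF l]) (use r0 in auto)
  then have "2 * EE l r0 * r0\<^sup>2 \<le> 8 * (U l r0 - U l (r0/2)) / 3"
    by (simp add: power2_eq_square algebra_simps)
  then have "2 * EE l r0 * r0\<^sup>2 / (k - 2) \<le> 8 * (U l r0 - U l (r0/2)) / 3 / (k - 2)"
    using k by (intro divide_right_mono) auto
  then have gr0: "g r0 < b" using B unfolding g_def by (simp add: field_simps)
  have Ug: "U l s \<le> g s" if "s \<ge> 0" for s
    using EE_bounds[OF l that] k unfolding g_def by simp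
  have gc: "continuous_on {a..c} g" if "a \<ge> 0" for a c
    unfolding g_def using U_cont_sub[OF l that] EE_cont_sub[OF l that] k by (intro continuous_intros) auto
  have helper: "g r1 \<le> g r0" if r1: "r1 \<ge> r0" and reg: "\<And>t. r0 < t \<Longrightarrow> t < r1 \<Longrightarrow> l * U l t < x0 * t" for r1
  proof -
    have "- g r0 \<le> - g r1"
    proof (rule mono_deriv[OF r1, of _ "\<lambda>t. - (2 * t * EE l t * (1 + (2 - t * G l t) / (k - 2)))"])
      show "continuous_on {r0..r1} (\<lambda>t. - g t)" using gc[of r0 r1] r0 by (intro continuous_intros) auto
      fix t assume t: "r0 < t" "t < r1"
      then have tp: "t > 0" using r0 by simp
      have D1: "((\<lambda>t. - g t) has_real_derivative - (2 * t * EE l t + 2 * (- G l t * EE l t * t\<^sup>2 + EE l t * (2 * t)) / (k - 2))) (at t)"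
        unfolding g_def using tp k
        by (auto intro!: derivative_eq_intros U_deriv[OF l] EE_deriv[OF l] simp: power2_eq_square)
      have eq: "2 * t * EE l t + 2 * (- G l t * EE l t * t\<^sup>2 + EE l t * (2 * t)) / (k - 2)
          = 2 * t * EE l t * (1 + (2 - t * G l t) / (k - 2))"
        using k by (simp add: field_simps power2_eq_square)
      show "((\<lambda>t. - g t) has_real_derivative - (2 * t * EE l t * (1 + (2 - t * G l t) / (k - 2)))) (at t)"
        by (rule DERIV_cong[OF D1]) (simp only: eq)
      define y where "y = l * (U l t / t)"
      have y: "y \<in> {0..x0}"
        using reg[OF t] tp U_bounds[OF l, of t] l unfolding y_def
        by (auto simp: pos_divide_le_eq mult.commute[of _ t] mult.assoc[symmetric])
      have "t * G l t = U l t * phi y" using G_eq[OF tp, of l] tp unfolding y_def by simp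
      also have "\<dots> \<ge> U l r0 * phi y"
        using U_mono[OF l _ , of r0 t] r0 t nonneg[of y] y by (intro mult_right_mono) auto
      finally have "t * G l t \<ge> k" using ky[OF y] by simp
      then have "(2 - t * G l t) / (k - 2) \<le> (2 - k) / (k - 2)" using k by (intro divide_right_mono) auto
      also have "(2 - k) / (k - 2) = -1" using k by (simp add: field_simps)
      finally have "1 + (2 - t * G l t) / (k - 2) \<le> 0" by simp
      moreover have "2 * t * EE l t \<ge> 0" using EE_bounds[OF l, of t] tp by simp
      ultimately show "0 \<le> - (2 * t * EE l t * (1 + (2 - t * G l t) / (k - 2)))"
        by (simp add: mult_nonneg_nonpos)
    qed
    then show ?thesis by simp
  qed
  have Ur0: "U l r0 < b" using Ug[of r0] r0 gr0 by simp
  have lUb: "l * U l s \<le> l * b" if "U l s < b" for s using that l by (simp add: mult_left_mono)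
  show ?thesis
  proof (cases "r \<le> r0")
    case True then show ?thesis using U_mono[OF l r True] Ur0 by simp
  next
    case False
    then have r1: "r0 \<le> r" by simp
    have allreg: "\<forall>t\<in>{r0..r}. l * U l t < x0 * t"
    proof (rule ccontr)
      assume neg: "\<not> (\<forall>t\<in>{r0..r}. l * U l t < x0 * t)"
      define S where "S = {t \<in> {r0..r}. x0 * t \<le> l * U l t}"
      have Sne: "S \<noteq> {}" using neg unfolding S_def by (auto simp: not_less)
      have Sbdd: "bdd_below S" unfolding S_def by (rule bdd_belowI[of _ r0]) auto
      have Scl: "closed S" unfolding S_def
        by (rule continuous_on_closed_Collect_le) (use U_cont_sub[OF l, of r0 r] r0 in \<open>auto intro!: continuous_intros\<close>)
      define T where "T = Inf S"
      have TS: "T \<in> S" unfolding T_def by (rule closed_contains_Inf[OF Sne Sbdd Scl])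
      have Tle: "T \<le> s" if "s \<in> S" for s unfolding T_def by (rule cInf_lower[OF that Sbdd])
      have Tr0: "T \<ge> r0" using TS unfolding S_def by auto
      have "r0 \<notin> S" using lUb[OF Ur0] xb unfolding S_def by auto
      then have Tgt: "T > r0" using TS Tr0 by (cases "T = r0") auto
      have "g T \<le> g r0"
      proof (rule helper)
        show "r0 \<le> T" using Tr0 .
        fix t assume t: "r0 < t" "t < T"
        then have "t \<notin> S" using Tle by force
        moreover have "t \<in> {r0..r}" using t TS unfolding S_def by auto
        ultimately show "l * U l t < x0 * t" unfolding S_def by auto
      qed
      then have "U l T < b" using Ug[of T] Tr0 r0 gr0 by simp
      then have "l * U l T \<le> l * b" by (rule lUb)
      also have "\<dots> < x0 * r0" by (rule xb)
      also have "\<dots> < x0 * T" using Tgt x0 by simp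
      finally show False using TS unfolding S_def by simp
    qed
    have "g r \<le> g r0" by (rule helper[OF r1]) (use allreg in auto)
    then show ?thesis using Ug[OF r] gr0 by simp
  qed
qed

lemma trap_enter:
  assumes l: "l \<ge> 0" and bd: "\<And>r. r \<ge> 0 \<Longrightarrow> U l r \<le> L"
    and approx: "\<And>e. e > 0 \<Longrightarrow> \<exists>r\<ge>0. U l r > L - e" and Lb: "L < b"
  shows "\<exists>r0. Trap b l r0"
proof -
  have L2: "L * phi 0 > 2" by (rule bounded_gt[OF l bd])
  have Lp: "L > 0" using L2 pos0 by (smt (verit) mult_nonpos_nonneg)
  define d where "d = L * phi 0 / 2 - 1"
  have d: "d > 0" using L2 by (simp add: d_def)
  define k where "k = L * phi 0 - d"
  have k: "k > 2" using L2 unfolding k_def d_def by linarith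
  define eta where "eta = d / (2 * L)"
  have eta: "eta > 0" using d Lp by (simp add: eta_def)
  have "continuous (at 0 within {0..}) phi" using cont by (simp add: continuous_on_eq_continuous_within)
  then obtain dd where dd: "dd > 0" and ddp: "\<And>y. y \<in> {0..} \<Longrightarrow> dist y 0 < dd \<Longrightarrow> dist (phi y) (phi 0) < eta"
    using eta unfolding continuous_within_eps_delta by blast
  define x0 where "x0 = dd / 2"
  have x0: "x0 > 0" using dd by (simp add: x0_def)
  have phiy: "phi y \<ge> phi 0 - eta" if "y \<in> {0..x0}" for y
    using ddp[of y] that dd by (auto simp: x0_def dist_real_def)
  define e1 where "e1 = d / (2 * phi 0)"
  define e2 where "e2 = 3 * (k - 2) * (b - L) / 8"
  have e1: "e1 > 0" using d pos0 by (simp add: e1_def)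
  have e2: "e2 > 0" using k Lb by (simp add: e2_def)
  define e where "e = min e1 e2"
  have e: "e > 0" using e1 e2 by (simp add: e_def)
  obtain rs where rs: "rs \<ge> 0" "U l rs > L - e" using approx[OF e] by blast
  have b0: "b > 0" using Lp Lb by simp
  define r0 where "r0 = max (2 * rs) (l * b / x0 + 1)"
  have r0p: "r0 > 0" unfolding r0_def using l b0 x0 by (smt (verit) divide_nonneg_pos mult_nonneg_nonneg)
  have r0h: "r0 / 2 \<ge> rs" unfolding r0_def by simp
  have Uh: "U l (r0/2) > L - e" using U_mono[OF l rs(1) r0h] rs by simp
  have Ur0: "U l r0 \<ge> U l (r0/2)" using U_mono[OF l _ , of "r0/2" r0] r0p by simp
  have Ur0L: "U l r0 \<le> L" using bd r0p by simp
  have eta_le: "eta \<le> phi 0"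
  proof -
    have "d \<le> L * phi 0 / 2" using L2 by (simp add: d_def)
    then have "d / (2 * L) \<le> L * phi 0 / 2 / (2 * L)" using Lp by (intro divide_right_mono) auto
    also have "\<dots> = phi 0 / 4" using Lp by (simp add: field_simps)
    finally show ?thesis using pos0 unfolding eta_def by simp
  qed
  have c1: "k \<le> U l r0 * phi y" if y: "y \<in> {0..x0}" for y
  proof -
    have "L - e1 \<le> U l r0" using Uh Ur0 e_def by (smt (verit) min.cobounded1)
    have Le: "L - e1 \<le> U l r0" using Uh Ur0 unfolding e_def by linarith
    have U0: "U l r0 \<ge> 0" using U_bounds[OF l, of r0] r0p by simp
    have "(L - e1) * (phi 0 - eta) \<le> U l r0 * (phi 0 - eta)" using Le eta_le by (intro mult_right_mono) auto
    also have "\<dots> \<le> U l r0 * phi y" using phiy[OF y] U0 by (intro mult_left_mono) auto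
    finally have a: "(L - e1) * (phi 0 - eta) \<le> U l r0 * phi y" .
    have "(L - e1) * (phi 0 - eta) = L * phi 0 - L * eta - e1 * phi 0 + e1 * eta" by (simp add: algebra_simps)
    also have "L * eta = d / 2" using Lp by (simp add: eta_def)
    also have "e1 * phi 0 = d / 2" using pos0 by (simp add: e1_def)
    finally have "(L - e1) * (phi 0 - eta) = k + e1 * eta" by (simp add: k_def)
    then show ?thesis using a e1 eta by (smt (verit) mult_pos_pos)
  qed
  have c2: "U l r0 + 8 * (U l r0 - U l (r0/2)) / (3 * (k - 2)) < b"
  proof -
    have "U l r0 - U l (r0/2) < e2" using Uh Ur0L unfolding e_def by linarith
    then have "8 * (U l r0 - U l (r0/2)) / (3 * (k - 2)) < 8 * e2 / (3 * (k - 2))"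
      using k by (intro divide_strict_right_mono) auto
    also have "8 * e2 / (3 * (k - 2)) = b - L" using k by (simp add: e2_def field_simps)
    finally show ?thesis using Ur0L by simp
  qed
  have c3: "l * b < x0 * r0"
  proof -
    have "l * b / x0 + 1 \<le> r0" unfolding r0_def by simp
    then have "x0 * (l * b / x0 + 1) \<le> x0 * r0" using x0 by (intro mult_left_mono) auto
    then show ?thesis using x0 by (simp add: algebra_simps)
  qed
  have "Trap b l r0" unfolding Trap_def using r0p k x0 c1 c2 c3 by blast
  then show ?thesis by blast
qed

lemma U_limit:
  assumes l: "l \<ge> 0" and bd: "\<And>r. r \<ge> 0 \<Longrightarrow> U l r \<le> L"
    and approx: "\<And>e. e > 0 \<Longrightarrow> \<exists>r\<ge>0. U l r > L - e"
  shows "(U l \<longlongrightarrow> L) at_top"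
proof (rule order_tendstoI)
  fix a assume "a < L"
  then obtain r where r: "r \<ge> 0" "U l r > a" using approx[of "L - a"] by auto
  show "\<forall>\<^sub>F x in at_top. a < U l x"
    unfolding eventually_at_top_linorder
    using r U_mono[OF l r(1)] by (intro exI[of _ r]) (auto intro: less_le_trans)
next
  fix a assume "L < a"
  show "\<forall>\<^sub>F x in at_top. U l x < a"
    unfolding eventually_at_top_linorder
    using bd \<open>L < a\<close> by (intro exI[of _ 0]) (auto intro: le_less_trans)
qed

end


lemma ev_nbhd:
  fixes l0 :: real
  assumes "eventually P (at l0 within {0..})" "P l0"
  shows "\<exists>d>0. \<forall>m\<ge>0. \<bar>m - l0\<bar> < d \<longrightarrow> P m"
proof -
  obtain d where d: "d > 0" "\<And>x. x \<in> {0..} \<Longrightarrow> x \<noteq> l0 \<Longrightarrow> dist x l0 < d \<Longrightarrow> P x"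
    using assms(1) unfolding eventually_at by blast
  show ?thesis using d assms(2) by (intro exI[of _ d]) (auto simp: dist_real_def)
qed

context phiset begin

lemma U_param_lip:
  assumes L: "L \<ge> 0" and r: "r \<ge> 0"
  shows "\<exists>C. \<forall>l\<in>{0..L}. \<forall>m\<in>{0..L}. \<bar>U l r - U m r\<bar> \<le> C * \<bar>l - m\<bar>"
proof -
  define R where "R = r + 1"
  have R: "R > 0" "r \<in> {0..R}" using r by (auto simp: R_def)
  define C0 where "C0 = exp (bet L R * R) * (2 * R^4 * MM (L * R))"
  have "\<bar>U l r - U m r\<bar> \<le> (r * C0) * \<bar>l - m\<bar>" if l: "l \<in> {0..L}" and m: "m \<in> {0..L}" for l m
  proof -
    have l0: "l \<ge> 0" and m0: "m \<ge> 0" using l m by auto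
    have "\<bar>sol l R r - sol m R r\<bar> \<le> C0 * \<bar>l - m\<bar>"
      unfolding C0_def by (rule IsFix_param[OF l m R(1) sol_IsFix[OF l0 R(1)] sol_IsFix[OF m0 R(1)] R(2)])
    moreover have "U l r - U m r = r * (sol l R r - sol m R r)"
      using sol_X[OF l0 R(1) R(2)] sol_X[OF m0 R(1) R(2)] by (simp add: U_def algebra_simps)
    ultimately show ?thesis using r by (simp add: abs_mult mult.assoc mult_left_mono)
  qed
  then show ?thesis by blast
qed

lemma U_param_tendsto:
  assumes l0: "l0 \<ge> 0" and r: "r \<ge> 0"
  shows "((\<lambda>m. U m r) \<longlongrightarrow> U l0 r) (at l0 within {0..})"
proof -
  have "\<exists>C. \<forall>l\<in>{0..l0+1}. \<forall>m\<in>{0..l0+1}. \<bar>U l r - U m r\<bar> \<le> C * \<bar>l - m\<bar>"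
    by (rule U_param_lip) (use l0 r in auto)
  then obtain C where C0: "\<forall>l\<in>{0..l0+1}. \<forall>m\<in>{0..l0+1}. \<bar>U l r - U m r\<bar> \<le> C * \<bar>l - m\<bar>" by blast
  have C: "\<bar>U l r - U m r\<bar> \<le> C * \<bar>l - m\<bar>" if "l \<in> {0..l0+1}" "m \<in> {0..l0+1}" for l m
    using C0 that by blast
  show ?thesis unfolding tendsto_iff
  proof (intro allI impI)
    fix e :: real assume e: "e > 0"
    define d where "d = min 1 (e / (\<bar>C\<bar> + 1))"
    have d: "d > 0" using e by (simp add: d_def)
    show "\<forall>\<^sub>F m in at l0 within {0..}. dist (U m r) (U l0 r) < e"
      unfolding eventually_at
    proof (intro exI[of _ d] conjI ballI impI)
      fix m assume m: "m \<in> {0..}" "m \<noteq> l0 \<and> dist m l0 < d"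
      then have mm: "m \<in> {0..l0+1}" "\<bar>m - l0\<bar> < d" using d_def by (auto simp: dist_real_def)
      have "\<bar>U m r - U l0 r\<bar> \<le> C * \<bar>m - l0\<bar>" using C[OF mm(1)] l0 by simp
      also have "\<dots> \<le> (\<bar>C\<bar> + 1) * \<bar>m - l0\<bar>" by (simp add: mult_right_mono)
      also have "\<dots> < (\<bar>C\<bar> + 1) * (e / (\<bar>C\<bar> + 1))"
        using mm(2) d_def by (intro mult_strict_left_mono) (auto simp: add_pos_nonneg)
      also have "\<dots> = e" by (simp add: add_pos_nonneg)
      finally show "dist (U m r) (U l0 r) < e" by (simp add: dist_real_def)
    qed (use d in auto)
  qed
qed

lemma trap_open:
  assumes l0: "l0 \<ge> 0" and T: "Trap b l0 r0"
  shows "\<exists>d>0. \<forall>m\<ge>0. \<bar>m - l0\<bar> < d \<longrightarrow> Trap b m r0"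
proof -
  obtain k x0 where r0: "r0 > 0" and k: "k > 2" and x0: "x0 > 0"
    and ky: "\<And>y. y \<in> {0..x0} \<Longrightarrow> k \<le> U l0 r0 * phi y"
    and B: "U l0 r0 + 8 * (U l0 r0 - U l0 (r0/2)) / (3 * (k - 2)) < b"
    and xb: "l0 * b < x0 * r0"
    using T unfolding Trap_def by blast
  define F where "F = at l0 within {0::real..}"
  define k' where "k' = (\<lambda>m. k - \<bar>U m r0 - U l0 r0\<bar> * phi 0)"
  have t1: "((\<lambda>m. U m r0) \<longlongrightarrow> U l0 r0) F" unfolding F_def by (rule U_param_tendsto[OF l0]) (use r0 in simp)
  have t2: "((\<lambda>m. U m (r0/2)) \<longlongrightarrow> U l0 (r0/2)) F" unfolding F_def by (rule U_param_tendsto[OF l0]) (use r0 in simp)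
  have tk: "(k' \<longlongrightarrow> k) F" unfolding k'_def
    using t1 by (auto intro!: tendsto_eq_intros)
  have e1: "eventually (\<lambda>m. k' m > 2) F" using order_tendstoD(1)[OF tk k] .
  have tB: "((\<lambda>m. U m r0 + 8 * (U m r0 - U m (r0/2)) / (3 * (k' m - 2))) \<longlongrightarrow>
      U l0 r0 + 8 * (U l0 r0 - U l0 (r0/2)) / (3 * (k - 2))) F"
    using t1 t2 tk k by (auto intro!: tendsto_eq_intros)
  have e2: "eventually (\<lambda>m. U m r0 + 8 * (U m r0 - U m (r0/2)) / (3 * (k' m - 2)) < b) F"
    using order_tendstoD(2)[OF tB B] .
  have tm: "((\<lambda>m. m * b) \<longlongrightarrow> l0 * b) F" unfolding F_def by (auto intro!: tendsto_eq_intros)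
  have e3: "eventually (\<lambda>m. m * b < x0 * r0) F" using order_tendstoD(2)[OF tm xb] .
  have e4: "eventually (\<lambda>m. m \<ge> 0) F" unfolding F_def by (simp add: eventually_at_filter)
  have c1: "k' m \<le> U m r0 * phi y" if m: "m \<ge> 0" and y: "y \<in> {0..x0}" for m y
  proof -
    have py: "0 \<le> phi y" "phi y \<le> phi 0" using nonneg[of y] le0[of y] y by auto
    have "U l0 r0 * phi y - U m r0 * phi y \<le> \<bar>U m r0 - U l0 r0\<bar> * phi y"
      using py by (simp add: left_diff_distrib[symmetric] abs_le_iff mult_right_mono)
    also have "\<dots> \<le> \<bar>U m r0 - U l0 r0\<bar> * phi 0" using py by (intro mult_left_mono) auto
    finally show ?thesis using ky[OF y] unfolding k'_def by simp
  qed
  have ev: "eventually (\<lambda>m. Trap b m r0) F"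
    using e1 e2 e3 e4
  proof eventually_elim
    case (elim m)
    then show ?case unfolding Trap_def using r0 x0 c1[of m] by blast
  qed
  show ?thesis using ev_nbhd[of "\<lambda>m. Trap b m r0", OF ev[unfolded F_def] T] .
qed

lemma sup_facts:
  assumes l: "l \<ge> 0" and bd: "\<And>r. r \<ge> 0 \<Longrightarrow> U l r \<le> M"
  shows "\<And>r. r \<ge> 0 \<Longrightarrow> U l r \<le> (SUP r\<in>{0..}. U l r)"
    and "\<And>e. e > 0 \<Longrightarrow> \<exists>r\<ge>0. U l r > (SUP r\<in>{0..}. U l r) - e"
    and "(SUP r\<in>{0..}. U l r) \<le> M"
proof -
  have bdd: "bdd_above (U l ` {0..})" by (rule bdd_aboveI[of _ M]) (use bd in auto)
  show "\<And>r. r \<ge> 0 \<Longrightarrow> U l r \<le> (SUP r\<in>{0..}. U l r)" by (rule cSUP_upper) (use bdd in auto)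
  show "\<exists>r\<ge>0. U l r > (SUP r\<in>{0..}. U l r) - e" if "e > 0" for e
  proof -
    have "(SUP r\<in>{0..}. U l r) - e < (SUP r\<in>{0..}. U l r)" using that by simp
    then show ?thesis using less_cSUP_iff[of "{0::real..}" "U l"] bdd by auto
  qed
  show "(SUP r\<in>{0..}. U l r) \<le> M" by (rule cSUP_least) (use bd in auto)
qed

lemma main_locale:
  assumes b: "b > 4 / phi 0"
  shows "\<exists>l>0. (U l \<longlongrightarrow> b) at_top"
proof -
  have b0: "b > 0" using b pos0 by (smt (verit) divide_pos_pos)
  define S1 where "S1 = {l::real. l > 0 \<and> (\<exists>r\<ge>0. U l r > b)}"
  define S2 where "S2 = {l::real. l > 0 \<and> (\<exists>r0. Trap b l r0)}"
  have o1: "open S1" unfolding open_dist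
  proof
    fix l0 assume "l0 \<in> S1"
    then obtain r where l0: "l0 > 0" and r: "r \<ge> 0" "U l0 r > b" unfolding S1_def by blast
    have "eventually (\<lambda>m. U m r > b) (at l0 within {0..})"
      using order_tendstoD(1)[OF U_param_tendsto[OF _ r(1)] r(2)] l0 by simp
    then obtain d where d: "d > 0" "\<And>m. m \<ge> 0 \<Longrightarrow> \<bar>m - l0\<bar> < d \<Longrightarrow> U m r > b"
      using ev_nbhd[of "\<lambda>m. U m r > b" l0] r by blast
    show "\<exists>e>0. \<forall>y. dist y l0 < e \<longrightarrow> y \<in> S1"
    proof (intro exI[of _ "min d l0"] conjI allI impI)
      fix y assume "dist y l0 < min d l0"
      then have "y > 0" "\<bar>y - l0\<bar> < d" by (auto simp: dist_real_def)
      then show "y \<in> S1" unfolding S1_def using d r by auto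
    qed (use d l0 in auto)
  qed
  have o2: "open S2" unfolding open_dist
  proof
    fix l0 assume "l0 \<in> S2"
    then obtain r0 where l0: "l0 > 0" and T: "Trap b l0 r0" unfolding S2_def by blast
    obtain d where d: "d > 0" "\<And>m. m \<ge> 0 \<Longrightarrow> \<bar>m - l0\<bar> < d \<Longrightarrow> Trap b m r0"
      using trap_open[OF _ T] l0 by auto
    show "\<exists>e>0. \<forall>y. dist y l0 < e \<longrightarrow> y \<in> S2"
    proof (intro exI[of _ "min d l0"] conjI allI impI)
      fix y assume "dist y l0 < min d l0"
      then have "y > 0" "\<bar>y - l0\<bar> < d" by (auto simp: dist_real_def)
      then have "Trap b y r0" using d(2)[of y] by simp
      then show "y \<in> S2" unfolding S2_def using \<open>y > 0\<close> by blast
    qed (use d l0 in auto)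
  qed
  have disj: "S1 \<inter> S2 \<inter> {0<..} = {}"
  proof -
    have False if l1: "l \<in> S1" and l2: "l \<in> S2" for l
    proof -
      obtain r where "l > 0" "r \<ge> 0" "U l r > b" using l1 unfolding S1_def by blast
      moreover obtain r0 where "Trap b l r0" using l2 unfolding S2_def by blast
      ultimately show False using trap_bound[of l b r0 r] by simp
    qed
    then show ?thesis by blast
  qed
  have ne1: "S1 \<inter> {0<..} \<noteq> {}"
  proof -
    define l where "l = sqrt (b * exp A) + 1"
    have s0: "sqrt (b * exp A) \<ge> 0" using b0 by simp
    have l: "l > 0" unfolding l_def using s0 by linarith
    have "l\<^sup>2 > b * exp A"
    proof -
      have s: "sqrt (b * exp A) \<ge> 0" using s0 .
      have "(sqrt (b * exp A))\<^sup>2 = b * exp A" using b0 by simp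
      moreover have "(sqrt (b * exp A))\<^sup>2 < l\<^sup>2" unfolding l_def using s by (intro power_strict_mono) auto
      ultimately show ?thesis by simp
    qed
    then have "l\<^sup>2 * exp (- A) > b" by (simp add: exp_minus field_simps)
    moreover have "l\<^sup>2 * exp (- A * l / l) \<le> U l l" by (rule U_large[OF l]) (use l in simp)
    ultimately have "U l l > b" using l by simp
    then have "l \<in> S1" unfolding S1_def using l by (auto intro!: exI[of _ l])
    then show ?thesis using l by auto
  qed
  have ne2: "S2 \<inter> {0<..} \<noteq> {}"
  proof -
    have bd: "\<And>r. r \<ge> 0 \<Longrightarrow> U 0 r \<le> 4 / phi 0" by (rule U_zero_bound)
    note sf = sup_facts[of 0, OF _ bd]
    obtain r0 where T: "Trap b 0 r0"
      using trap_enter[of 0 "SUP r\<in>{0..}. U 0 r" b] sf b by fastforce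
    obtain d where d: "d > 0" "\<And>m. m \<ge> 0 \<Longrightarrow> \<bar>m - 0\<bar> < d \<Longrightarrow> Trap b m r0"
      using trap_open[OF _ T] by auto
    have "d/2 \<in> S2" unfolding S2_def using d(1) d(2)[of "d/2"] by auto
    then show ?thesis using d by auto
  qed
  have "\<not> {0<..} \<subseteq> S1 \<union> S2"
    using connectedD[OF connected_Ioi o1 o2 disj] ne1 ne2 by blast
  then obtain l where l: "l > 0" "l \<notin> S1" "l \<notin> S2" by auto
  have bd: "\<And>r. r \<ge> 0 \<Longrightarrow> U l r \<le> b" using l unfolding S1_def by (auto simp: not_less)
  note sf = sup_facts[of l, OF _ bd]
  define L where "L = (SUP r\<in>{0..}. U l r)"
  have Lb: "L \<le> b" using sf l L_def by simp
  have "L = b"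
  proof (rule ccontr)
    assume "L \<noteq> b"
    then have "L < b" using Lb by simp
    then obtain r0 where "Trap b l r0" using trap_enter[of l L b] sf l unfolding L_def by fastforce
    then have "l \<in> S2" unfolding S2_def using l by auto
    then show False using l by simp
  qed
  then have "(U l \<longlongrightarrow> b) at_top" using U_limit[of l L] sf l unfolding L_def by fastforce
  then show ?thesis using l by blast
qed

end

context phiset begin

lemma final_locale:
  assumes b: "b > 4 / phi 0"
  shows "\<exists>v v' v'' :: real \<Rightarrow> real.
           (\<forall>r\<ge>0. (v has_real_derivative v' r) (at r within {0..}))
         \<and> continuous_on {0..} v'
         \<and> (\<forall>r>0. (v' has_real_derivative v'' r) (at r))
         \<and> continuous_on {0<..} v''
         \<and> v 0 = 0 \<and> v' 0 = 0
         \<and> (\<forall>r>0. v r \<ge> 0 \<and> r * v'' r = v' r * (1 - v r * phi (v r / r)))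
         \<and> (v \<longlongrightarrow> b) at_top"
proof -
  obtain l where l: "l > 0" and lim: "(U l \<longlongrightarrow> b) at_top" using main_locale[OF b] by blast
  have l0: "l \<ge> 0" using l by simp
  define v where "v = (\<lambda>r. U l (l * r))"
  define v' where "v' = (\<lambda>r. 2 * l * l * r * EE l (l * r))"
  define v'' where "v'' = (\<lambda>r. 2 * l * l * EE l (l * r) - 2 * l * l * r * l * G l (l * r) * EE l (l * r))"
  have d1: "(v has_real_derivative v' r) (at r within {0..})" if r: "r \<ge> 0" for r
  proof -
    have lr: "l * r \<ge> 0" using l r by simp
    have o: "(U l has_real_derivative 2 * (l * r) * EE l (l * r)) (at (l * r) within ((\<lambda>r. l * r) ` {0..}))"
      by (rule DERIV_subset[OF U_deriv0[OF l0 lr]]) (use l in auto)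
    have i: "((\<lambda>r. l * r) has_real_derivative l) (at r within {0..})"
      by (auto intro!: derivative_eq_intros)
    have "((U l \<circ> (\<lambda>r. l * r)) has_real_derivative 2 * (l * r) * EE l (l * r) * l) (at r within {0..})"
      using DERIV_image_chain[OF o i] .
    then show ?thesis unfolding v_def v'_def by (simp add: o_def algebra_simps)
  qed
  have c1: "continuous_on {0..} v'"
  proof -
    have "continuous_on {0..} (\<lambda>r. EE l (l * r))"
      by (rule continuous_on_compose2[OF EE_cont[OF l0]]) (use l in \<open>auto intro!: continuous_intros\<close>)
    then show ?thesis unfolding v'_def by (intro continuous_intros)
  qed
  have d2: "(v' has_real_derivative v'' r) (at r)" if r: "r > 0" for r
  proof -
    have lr: "l * r > 0" using l r by simp
    have e: "((\<lambda>r. EE l (l * r)) has_real_derivative (- G l (l * r) * EE l (l * r)) * l) (at r)"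
      using DERIV_chain2[where f="EE l" and g="\<lambda>r. l * r", OF EE_deriv[OF l0 lr]] by (auto intro!: derivative_eq_intros)
    have m: "((\<lambda>r. 2 * l * l * r) has_real_derivative 2 * l * l) (at r)"
      by (auto intro!: derivative_eq_intros)
    show ?thesis unfolding v'_def v''_def
      using DERIV_mult[OF m e] by (simp add: algebra_simps)
  qed
  have c2: "continuous_on {0<..} v''"
  proof -
    have e: "continuous_on {0<..} (\<lambda>r. EE l (l * r))"
      by (rule continuous_on_compose2[OF EE_cont[OF l0]]) (use l in \<open>auto intro!: continuous_intros\<close>)
    have g: "continuous_on {0<..} (\<lambda>r. G l (l * r))"
      by (rule continuous_on_compose2[OF G_cont[OF l0]]) (use l in \<open>auto intro!: continuous_intros\<close>)
    show ?thesis unfolding v''_def using e g by (intro continuous_intros)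
  qed
  have eq: "v r \<ge> 0 \<and> r * v'' r = v' r * (1 - v r * phi (v r / r))" if r: "r > 0" for r
  proof -
    have lr: "l * r > 0" using l r by simp
    have G: "G l (l * r) = (v r / (l * r)) * phi (v r / r)"
      using G_eq[OF lr, of l] l r unfolding v_def by simp
    have "v r \<ge> 0" using U_bounds[OF l0, of "l * r"] lr unfolding v_def by simp
    moreover have "r * v'' r = v' r * (1 - v r * phi (v r / r))"
      unfolding v''_def v'_def G using l r by (simp add: field_simps)
    ultimately show ?thesis by simp
  qed
  have lim2: "(v \<longlongrightarrow> b) at_top"
  proof -
    have f: "filterlim (\<lambda>r. l * r) at_top at_top"
      by (rule filterlim_tendsto_pos_mult_at_top[OF tendsto_const l filterlim_ident])
    show ?thesis unfolding v_def using filterlim_compose[OF lim f] .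
  qed
  have z: "v 0 = 0" "v' 0 = 0" by (simp_all add: v_def v'_def U0)
  show ?thesis
    by (rule exI[of _ v], rule exI[of _ v'], rule exI[of _ v''])
       (use d1 c1 d2 c2 z eq lim2 in blast)
qed

end

theorem proposition3p3:
  fixes \<phi> :: "real \<Rightarrow> real" and A_inf b :: real
  assumes phi_C1: "\<exists>\<phi>'. (\<forall>r\<ge>0. (\<phi> has_real_derivative \<phi>' r) (at r within {0..}))
                        \<and> continuous_on {0..} \<phi>'"
    and phi_nonneg: "\<forall>r\<ge>0. \<phi> r \<ge> 0"
    and phi_max: "\<forall>r\<ge>0. \<phi> r \<le> \<phi> 0"
    and phi0_pos: "\<phi> 0 > 0"
    and A_bound: "\<forall>r\<ge>0. \<bar>r * \<phi> r\<bar> \<le> A_inf"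
    and A_attained: "\<exists>r\<ge>0. \<bar>r * \<phi> r\<bar> = A_inf"
    and A_pos: "A_inf > 0"
    and b_gt: "b > 4 / \<phi> 0"
  shows "\<exists>v v' v'' :: real \<Rightarrow> real.
           (\<forall>r\<ge>0. (v has_real_derivative v' r) (at r within {0..}))
         \<and> continuous_on {0..} v'
         \<and> (\<forall>r>0. (v' has_real_derivative v'' r) (at r))
         \<and> continuous_on {0<..} v''
         \<and> v 0 = 0 \<and> v' 0 = 0
         \<and> (\<forall>r>0. v r \<ge> 0 \<and> r * v'' r = v' r * (1 - v r * \<phi> (v r / r)))
         \<and> (v \<longlongrightarrow> b) at_top"
proof -
  obtain \<phi>' where d: "\<forall>r\<ge>0. (\<phi> has_real_derivative \<phi>' r) (at r within {0..})"
    and c': "continuous_on {0..} \<phi>'" using phi_C1 by blast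
  have cont: "continuous_on {0..} \<phi>"
    unfolding continuous_on_eq_continuous_within using d DERIV_continuous by blast
  have lip: "\<exists>M\<ge>0. \<forall>y1\<in>{0..S}. \<forall>y2\<in>{0..S}. \<bar>\<phi> y1 - \<phi> y2\<bar> \<le> M * \<bar>y1 - y2\<bar>"
    if S: "S \<ge> 0" for S :: real
  proof -
    have "compact (\<phi>' ` {0..S})"
      by (rule compact_continuous_image) (use c' in \<open>auto intro: continuous_on_subset\<close>)
    then have "bounded (\<phi>' ` {0..S})" by (rule compact_imp_bounded)
    then obtain B where B: "\<forall>x\<in>\<phi>' ` {0..S}. norm x \<le> B"
      unfolding bounded_iff by blast
    define M where "M = max B 0"
    have "\<bar>\<phi> y1 - \<phi> y2\<bar> \<le> M * \<bar>y1 - y2\<bar>" if y: "y1 \<in> {0..S}" "y2 \<in> {0..S}" for y1 y2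
    proof -
      have "norm (\<phi> y1 - \<phi> y2) \<le> M * norm (y1 - y2)"
      proof (rule field_differentiable_bound[of "{0..S}" \<phi> \<phi>'])
        show "convex {0..S}" by simp
        fix z assume z: "z \<in> {0..S}"
        have z0: "z \<ge> 0" using z by simp
        have dz: "(\<phi> has_field_derivative \<phi>' z) (at z within {0..})" using d z0 by blast
        show "(\<phi> has_field_derivative \<phi>' z) (at z within {0..S})"
          by (rule DERIV_subset[OF dz]) auto
        have "\<phi>' z \<in> \<phi>' ` {0..S}" using z by (rule imageI)
        then have "norm (\<phi>' z) \<le> B" using B by blast
        then show "norm (\<phi>' z) \<le> M" unfolding M_def by simp
      qed (use y in auto)
      then show ?thesis by simp
    qed
    moreover have "M \<ge> 0" unfolding M_def by simp
    ultimately show ?thesis by blast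
  qed
  interpret phiset \<phi> A_inf
    by (rule phiset.intro) (use cont lip phi_nonneg phi_max phi0_pos A_bound in \<open>auto simp: abs_le_iff\<close>)
  show ?thesis using final_locale[OF b_gt] .
qed

end
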